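(* Assume that (H1)-(H2) hold, $\widetilde{\mathcal{L}}$ is compact and $k_{w}(x, \cdot) \in L^2(pw)$ for some $x\in ]a,b[$. For all $g_0\in E^2(p,w)$ such that $\mathbb{E}_p[g_0 e_1w]\neq 0$, we have $$\lim_{n\rightarrow \infty}\left(\frac{\widetilde{\mathcal{L}} ^{n+1}g_0}{\widetilde{\mathcal{L}} ^ng_0}\right)(x)=C(p,w).$$
   Context: Let $-\infty\le a<b\le\infty$, $p$ a probability density on $]a,b[$ with $p>0$ a.e., $w\in L^1_{\text{loc}}(]a,b[)$ a weight with $w>0$ a.e. and $pw\in L^1_{\text{loc}}$. Let $P(x)=\int_a^x p$, $\bar P=1-P$, $K(x,y)=P(x\wedge y)\bar P(x\vee y)$, $k(x,y)=K(x,y)/(p(x)p(y))$, $k_w(x,y)=k(x,y)/(w(x)w(y))$. $C(p,w)$ is the smallest $C$ with $\mathrm{Var}_p[h]\le C\,\mathbb{E}_p[|h'|^2w]$ for all weakly differentiable $h\in L^2(p)$ with $h'\in L^2(pw)$. Hypotheses: (H1) $C(p,w)<\infty$; (H2) $L^2(pw)\subset L^1_{\text{loc}}(]a,b[)$. $E^2(p,w)=\{f\in L^2(pw)\cap L^1_{\text{loc}}: x\mapsto\int_{x_0}^x f\in L^2(p)\}$ with $L^2(pw)$ norm. The operator $\widetilde{\mathcal{L}} f(x)=\frac{1}{p(x)w(x)}\int_a^b K(x,y)f(y)\,dy$, iterates $\widetilde{\mathcal{L}}^{n+1}=\widetilde{\mathcal{L}}(\widetilde{\mathcal{L}}^n)$;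 pointwise values at $x$ are understood via $\int_a^bK(x,\cdot)f$, which makes sense when $k_w(x,\cdot)\in L^2(pw)$. When compact, $\widetilde{\mathcal{L}}$ has largest eigenvalue $\kappa_1=C(p,w)$ with a.e. positive eigenvector $e_1$ (part of an orthonormal eigenbasis of $E^2(p,w)$). *)

theory Defs
  imports "HOL-Analysis.Analysis"
begin

definition Ioi :: "ereal \<Rightarrow> ereal \<Rightarrow> real set" where
  "Ioi a b = {x. a < ereal x \<and> ereal x < b}"

definition loc_int :: "ereal \<Rightarrow> ereal \<Rightarrow> (real \<Rightarrow> real) \<Rightarrow> bool" where
  "loc_int a b f \<longleftrightarrow> (\<forall>c d. a < ereal c \<and> ereal d < b \<longrightarrow> set_integrable lborel {c..d} f)"

definition prob_density :: "ereal \<Rightarrow> ereal \<Rightarrow> (real \<Rightarrow> real) \<Rightarrow> bool" where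
  "prob_density a b p \<longleftrightarrow> p \<in> borel_measurable borel \<and>
     set_integrable lborel (Ioi a b) p \<and> (LINT y:Ioi a b|lborel. p y) = 1 \<and>
     (AE y in lborel. y \<in> Ioi a b \<longrightarrow> p y > 0)"

definition weight :: "ereal \<Rightarrow> ereal \<Rightarrow> (real \<Rightarrow> real) \<Rightarrow> (real \<Rightarrow> real) \<Rightarrow> bool" where
  "weight a b p w \<longleftrightarrow> w \<in> borel_measurable borel \<and> loc_int a b w \<and>
     (AE y in lborel. y \<in> Ioi a b \<longrightarrow> w y > 0) \<and> loc_int a b (\<lambda>y. p y * w y)"

definition cdf :: "ereal \<Rightarrow> ereal \<Rightarrow> (real \<Rightarrow> real) \<Rightarrow> real \<Rightarrow> real" where
  "cdf a b p x = (LINT y:{y \<in> Ioi a b. y \<le> x}|lborel. p y)"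

definition Kker :: "ereal \<Rightarrow> ereal \<Rightarrow> (real \<Rightarrow> real) \<Rightarrow> real \<Rightarrow> real \<Rightarrow> real" where
  "Kker a b p x y = cdf a b p (min x y) * (1 - cdf a b p (max x y))"

definition kker :: "ereal \<Rightarrow> ereal \<Rightarrow> (real \<Rightarrow> real) \<Rightarrow> real \<Rightarrow> real \<Rightarrow> real" where
  "kker a b p x y = Kker a b p x y / (p x * p y)"

definition kw :: "ereal \<Rightarrow> ereal \<Rightarrow> (real \<Rightarrow> real) \<Rightarrow> (real \<Rightarrow> real) \<Rightarrow> real \<Rightarrow> real \<Rightarrow> real" where
  "kw a b p w x y = kker a b p x y / (w x * w y)"

definition L2 :: "ereal \<Rightarrow> ereal \<Rightarrow> (real \<Rightarrow> real) \<Rightarrow> (real \<Rightarrow> real) \<Rightarrow> bool" where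
  "L2 a b q f \<longleftrightarrow> f \<in> borel_measurable borel \<and>
     set_integrable lborel (Ioi a b) (\<lambda>y. (f y)\<^sup>2 * q y)"

definition test_fun :: "ereal \<Rightarrow> ereal \<Rightarrow> (real \<Rightarrow> real) \<Rightarrow> bool" where
  "test_fun a b \<phi> \<longleftrightarrow> (\<forall>n x. ((deriv ^^ n) \<phi>) differentiable (at x)) \<and>
     (\<exists>c d. a < ereal c \<and> ereal d < b \<and> (\<forall>y. y \<notin> {c..d} \<longrightarrow> \<phi> y = 0))"

definition weak_deriv :: "ereal \<Rightarrow> ereal \<Rightarrow> (real \<Rightarrow> real) \<Rightarrow> (real \<Rightarrow> real) \<Rightarrow> bool" where
  "weak_deriv a b h h' \<longleftrightarrow> h \<in> borel_measurable borel \<and> h' \<in> borel_measurable borel \<and>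
     loc_int a b h \<and> loc_int a b h' \<and>
     (\<forall>\<phi>. test_fun a b \<phi> \<longrightarrow>
        (LINT y:Ioi a b|lborel. h y * deriv \<phi> y) = - (LINT y:Ioi a b|lborel. h' y * \<phi> y))"

definition variance_p :: "ereal \<Rightarrow> ereal \<Rightarrow> (real \<Rightarrow> real) \<Rightarrow> (real \<Rightarrow> real) \<Rightarrow> real" where
  "variance_p a b p h = (LINT y:Ioi a b|lborel. (h y)\<^sup>2 * p y) - (LINT y:Ioi a b|lborel. h y * p y)\<^sup>2"

definition energy :: "ereal \<Rightarrow> ereal \<Rightarrow> (real \<Rightarrow> real) \<Rightarrow> (real \<Rightarrow> real) \<Rightarrow> (real \<Rightarrow> real) \<Rightarrow> real" where
  "energy a b p w h' = (LINT y:Ioi a b|lborel. \<bar>h' y\<bar>\<^sup>2 * w y * p y)"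

definition poincare_consts :: "ereal \<Rightarrow> ereal \<Rightarrow> (real \<Rightarrow> real) \<Rightarrow> (real \<Rightarrow> real) \<Rightarrow> real set" where
  "poincare_consts a b p w = {C. C \<ge> 0 \<and> (\<forall>h h'. L2 a b p h \<and> weak_deriv a b h h' \<and>
       L2 a b (\<lambda>y. p y * w y) h' \<longrightarrow> variance_p a b p h \<le> C * energy a b p w h')}"

definition Cpw :: "ereal \<Rightarrow> ereal \<Rightarrow> (real \<Rightarrow> real) \<Rightarrow> (real \<Rightarrow> real) \<Rightarrow> real" where
  "Cpw a b p w = Inf (poincare_consts a b p w)"

definition H1 :: "ereal \<Rightarrow> ereal \<Rightarrow> (real \<Rightarrow> real) \<Rightarrow> (real \<Rightarrow> real) \<Rightarrow> bool" where
  "H1 a b p w \<longleftrightarrow> poincare_consts a b p w \<noteq> {}"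

definition H2 :: "ereal \<Rightarrow> ereal \<Rightarrow> (real \<Rightarrow> real) \<Rightarrow> (real \<Rightarrow> real) \<Rightarrow> bool" where
  "H2 a b p w \<longleftrightarrow> (\<forall>f. L2 a b (\<lambda>y. p y * w y) f \<longrightarrow> loc_int a b f)"

text \<open>The space E^2(p,w) (as a set of representatives).\<close>
definition E2 :: "ereal \<Rightarrow> ereal \<Rightarrow> (real \<Rightarrow> real) \<Rightarrow> (real \<Rightarrow> real) \<Rightarrow> (real \<Rightarrow> real) set" where
  "E2 a b p w = {f. L2 a b (\<lambda>y. p y * w y) f \<and> loc_int a b f \<and>
      (\<exists>x0 \<in> Ioi a b. L2 a b p (\<lambda>x. LBINT y=ereal x0..ereal x. f y))}"

definition normsq :: "ereal \<Rightarrow> ereal \<Rightarrow> (real \<Rightarrow> real) \<Rightarrow> (real \<Rightarrow> real) \<Rightarrow> (real \<Rightarrow> real) \<Rightarrow> real" where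
  "normsq a b p w f = (LINT y:Ioi a b|lborel. (f y)\<^sup>2 * p y * w y)"

definition Lt :: "ereal \<Rightarrow> ereal \<Rightarrow> (real \<Rightarrow> real) \<Rightarrow> (real \<Rightarrow> real) \<Rightarrow> (real \<Rightarrow> real) \<Rightarrow> real \<Rightarrow> real" where
  "Lt a b p w f = (\<lambda>x. 1 / (p x * w x) * (LINT y:Ioi a b|lborel. Kker a b p x y * f y))"

definition Lt_compact :: "ereal \<Rightarrow> ereal \<Rightarrow> (real \<Rightarrow> real) \<Rightarrow> (real \<Rightarrow> real) \<Rightarrow> bool" where
  "Lt_compact a b p w \<longleftrightarrow>
     (\<forall>f \<in> E2 a b p w. Lt a b p w f \<in> E2 a b p w) \<and>
     (\<forall>F :: nat \<Rightarrow> real \<Rightarrow> real. (\<forall>n. F n \<in> E2 a b p w) \<and> (\<exists>B. \<forall>n. normsq a b p w (F n) \<le> B) \<longrightarrow>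
        (\<exists>(r :: nat \<Rightarrow> nat) g. strict_mono r \<and> g \<in> E2 a b p w \<and>
           (\<lambda>n. normsq a b p w (\<lambda>y. Lt a b p w (F (r n)) y - g y)) \<longlonglongrightarrow> 0))"

end

theory Submission
  imports Defs
begin


lemma Ioi_einterval: "Ioi a b = einterval a b" unfolding Ioi_def einterval_def by simp

lemma Ioi_sets[measurable]: "Ioi a b \<in> sets borel"
  unfolding Ioi_einterval by simp

lemma AE_point_exists:
  assumes "AE y in lborel. y \<in> A \<longrightarrow> P y" and "emeasure lborel A > 0" and "A \<in> sets lborel"
  shows "\<exists>y\<in>A. P y"
proof (rule ccontr)
  assume "\<not> ?thesis"
  then have "AE y in lborel. y \<notin> A" using assms(1) by (auto elim: AE_mp)
  then obtain N where N: "N \<in> null_sets lborel" "{y \<in> space lborel. \<not> y \<notin> A} \<subseteq> N"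
    by (auto simp: eventually_ae_filter)
  then have "A \<subseteq> N" by auto
  then have "emeasure lborel A \<le> emeasure lborel N"
    using N(1) by (intro emeasure_mono) auto
  with N(1) assms(2) show False by auto
qed

lemma emeasure_pos_interval:
  fixes a b :: ereal assumes "a < b" shows "emeasure lborel (einterval a b) > 0"
proof -
  obtain c where c: "a < ereal c" "ereal c < b" using ereal_dense2[OF assms] by auto
  obtain d where d: "ereal c < ereal d" "ereal d < b" using ereal_dense2[OF c(2)] by auto
  have "{c<..<d} \<subseteq> einterval a b"
  proof
    fix x assume x: "x \<in> {c<..<d}"
    then have "ereal c < ereal x" "ereal x < ereal d" by auto
    then show "x \<in> einterval a b" using c d unfolding einterval_def
      by (metis (mono_tags, lifting) mem_Collect_eq order_less_trans)
  qed
  then have "emeasure lborel {c<..<d} \<le> emeasure lborel (einterval a b)"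
    by (intro emeasure_mono) auto
  moreover have "emeasure lborel {c<..<d} > 0" using d by simp
  ultimately show ?thesis by auto
qed

lemma sli_real: "set_lebesgue_integral M A (f::_\<Rightarrow>real) = integral\<^sup>L M (\<lambda>y. indicator A y * f y)"
  unfolding set_lebesgue_integral_def by simp

lemma si_real: "set_integrable M A (f::_\<Rightarrow>real) \<longleftrightarrow> integrable M (\<lambda>y. indicator A y * f y)"
  unfolding set_integrable_def by simp

lemma integral_pos_AE:
  fixes f :: "real \<Rightarrow> real"
  assumes A: "A \<in> sets lborel" "emeasure lborel A > 0"
    and int: "integrable lborel (\<lambda>y. indicator A y * f y)"
    and pos: "AE y in lborel. y \<in> A \<longrightarrow> f y > 0"
  shows "integral\<^sup>L lborel (\<lambda>y. indicator A y * f y) > 0"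
proof -
  have nn: "AE y in lborel. 0 \<le> indicator A y * f y"
    using pos by eventually_elim (auto simp: indicator_def)
  have "integral\<^sup>L lborel (\<lambda>y. indicator A y * f y) \<ge> 0"
    using nn by (rule integral_nonneg_AE)
  moreover have "integral\<^sup>L lborel (\<lambda>y. indicator A y * f y) \<noteq> 0"
  proof
    assume "integral\<^sup>L lborel (\<lambda>y. indicator A y * f y) = 0"
    then have "AE y in lborel. indicator A y * f y = 0"
      using integral_nonneg_eq_0_iff_AE[OF int nn] by simp
    then have "AE y in lborel. y \<in> A \<longrightarrow> False"
      using pos by eventually_elim (auto simp: indicator_def)
    from AE_point_exists[OF this A(2) A(1)] show False by simp
  qed
  ultimately show ?thesis by linarith
qed

locale S =
  fixes a b :: ereal and p w e1 :: "real \<Rightarrow> real" and x0 \<kappa> :: real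
  assumes ab: "a < b"
    and pd: "prob_density a b p"
    and wt: "weight a b p w"
    and cpt: "Lt_compact a b p w"
    and x0I: "x0 \<in> Ioi a b" and px0: "p x0 > 0" and wx0: "w x0 > 0"
    and kwL2: "L2 a b (\<lambda>y. p y * w y) (kw a b p w x0)"
    and e1E: "e1 \<in> E2 a b p w"
    and eig: "AE y in lborel. y \<in> Ioi a b \<longrightarrow> Lt a b p w e1 y = \<kappa> * e1 y"
    and e1pos: "AE y in lborel. y \<in> Ioi a b \<longrightarrow> e1 y > 0"
    and e1n: "normsq a b p w e1 = 1"
begin

abbreviation "I \<equiv> Ioi a b"
abbreviation "q y \<equiv> p y * w y"
abbreviation "P \<equiv> cdf a b p"
abbreviation "K \<equiv> Kker a b p"
abbreviation "T \<equiv> Lt a b p w"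
abbreviation "nsq \<equiv> normsq a b p w"
abbreviation "L2q \<equiv> L2 a b (\<lambda>y. p y * w y)"
definition "ip f g = integral\<^sup>L lborel (\<lambda>y. indicator I y * (f y * g y * q y))"

lemma p_meas[measurable]: "p \<in> borel_measurable borel"
  using pd unfolding prob_density_def by auto
lemma w_meas[measurable]: "w \<in> borel_measurable borel"
  using wt unfolding weight_def by auto
lemma p_int: "integrable lborel (\<lambda>y. indicator I y * p y)"
  using pd unfolding prob_density_def si_real by auto
lemma p_tot: "integral\<^sup>L lborel (\<lambda>y. indicator I y * p y) = 1"
  using pd unfolding prob_density_def sli_real by auto
lemma I_meas[measurable]: "I \<in> sets lborel" by simp
lemma I_pos: "emeasure lborel I > 0"
  unfolding Ioi_einterval using emeasure_pos_interval[OF ab] .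

lemma AE_pos: "AE y in lborel. y \<in> I \<longrightarrow> p y > 0 \<and> w y > 0 \<and> q y > 0 \<and> e1 y > 0 \<and> T e1 y = \<kappa> * e1 y"
proof -
  have 1: "AE y in lborel. y \<in> I \<longrightarrow> p y > 0" using pd unfolding prob_density_def by auto
  have 2: "AE y in lborel. y \<in> I \<longrightarrow> w y > 0" using wt unfolding weight_def by auto
  show ?thesis using 1 2 eig e1pos by eventually_elim (metis mult_pos_pos)
qed


definition "Q x = integral\<^sup>L lborel (\<lambda>y. indicator {..x} y * (indicator I y * p y))"
definition "Qc x = integral\<^sup>L lborel (\<lambda>y. indicator {x<..} y * (indicator I y * p y))"

lemma P_eq: "P x = Q x"
  unfolding cdf_def Q_def sli_real by (intro arg_cong[where f="integral\<^sup>L lborel"]) (auto simp: indicator_def fun_eq_iff)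

lemma int_sub: "B \<in> sets borel \<Longrightarrow> integrable lborel (\<lambda>y. indicator B y * (indicator I y * p y))"
  using integrable_mult_indicator[OF _ p_int, of B] by simp

lemma PQ: "P x + Qc x = 1"
proof -
  have "P x + Qc x = integral\<^sup>L lborel (\<lambda>y. indicator {..x} y * (indicator I y * p y) + indicator {x<..} y * (indicator I y * p y))"
    unfolding P_eq Q_def Qc_def by (rule Bochner_Integration.integral_add[OF int_sub int_sub, symmetric]) auto
  also have "\<dots> = integral\<^sup>L lborel (\<lambda>y. indicator I y * p y)"
    by (intro arg_cong[where f="integral\<^sup>L lborel"]) (auto simp: indicator_def fun_eq_iff)
  finally show ?thesis using p_tot by simp
qed

lemma AE_p_nn: "AE y in lborel. 0 \<le> indicator B y * (indicator I y * p y)"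
  using AE_pos by eventually_elim (auto simp: indicator_def)

lemma P_nn: "0 \<le> P x"
  unfolding P_eq Q_def by (rule integral_nonneg_AE[OF AE_p_nn])
lemma Qc_nn: "0 \<le> Qc x"
  unfolding Qc_def by (rule integral_nonneg_AE[OF AE_p_nn])
lemma P_le1: "P x \<le> 1" using PQ[of x] Qc_nn[of x] by linarith

lemma P_mono: "x \<le> x' \<Longrightarrow> P x \<le> P x'"
  unfolding P_eq Q_def
proof (rule integral_mono_AE[OF int_sub int_sub])
  assume "x \<le> x'"
  show "AE y in lborel. indicator {..x} y * (indicator I y * p y) \<le> indicator {..x'} y * (indicator I y * p y)"
    using AE_pos by eventually_elim (use \<open>x \<le> x'\<close> in \<open>auto simp: indicator_def\<close>)
qed auto

lemma P_mono': "mono P" using P_mono by (auto simp: mono_def)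

lemma P_meas[measurable]: "P \<in> borel_measurable borel"
  using borel_measurable_mono[OF P_mono'] .

lemma sub_pos:
  assumes "a' < b'" "einterval a' b' \<subseteq> I \<inter> B" "B \<in> sets borel"
  shows "integral\<^sup>L lborel (\<lambda>y. indicator B y * (indicator I y * p y)) > 0"
proof -
  have m: "emeasure lborel (einterval a' b') \<le> emeasure lborel (I \<inter> B)"
    using assms by (intro emeasure_mono) auto
  have "emeasure lborel (I \<inter> B) > 0" using emeasure_pos_interval[OF assms(1)] m by auto
  moreover have "integrable lborel (\<lambda>y. indicator (I \<inter> B) y * p y)"
    using int_sub[OF assms(3)] by (simp add: indicator_inter_arith mult.assoc mult.commute mult.left_commute)
  moreover have "AE y in lborel. y \<in> I \<inter> B \<longrightarrow> p y > 0" using AE_pos by eventually_elim auto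
  ultimately have "integral\<^sup>L lborel (\<lambda>y. indicator (I \<inter> B) y * p y) > 0"
    using assms by (intro integral_pos_AE) auto
  then show ?thesis by (simp add: indicator_inter_arith mult.assoc mult.commute mult.left_commute)
qed

lemma P_pos: assumes "x \<in> I" shows "P x > 0"
proof -
  have "a < ereal x" using assms by (simp add: Ioi_def)
  moreover have "einterval a (ereal x) \<subseteq> I \<inter> {..x}" using assms
    by (auto simp: Ioi_def einterval_def) (meson less_ereal.simps(1) less_trans)
  ultimately show ?thesis unfolding P_eq Q_def by (intro sub_pos) auto
qed

lemma Qc_pos: assumes "x \<in> I" shows "Qc x > 0"
proof -
  have "ereal x < b" using assms by (simp add: Ioi_def)
  moreover have "einterval (ereal x) b \<subseteq> I \<inter> {x<..}" using assms
    by (auto simp: Ioi_def einterval_def) (meson less_ereal.simps(1) less_trans)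
  ultimately show ?thesis unfolding Qc_def by (intro sub_pos) auto
qed

lemma P_lt1: "x \<in> I \<Longrightarrow> P x < 1" using PQ[of x] Qc_pos[of x] by linarith


lemma K_def': "K y z = P (min y z) * (1 - P (max y z))"
  unfolding Kker_def ..

lemma K_nn: "0 \<le> K y z"
  unfolding K_def' using P_nn P_le1 by (simp add: mult_nonneg_nonneg)

lemma K_sym: "K y z = K z y"
  unfolding K_def' by (simp add: min.commute max.commute)

lemma I_min_max: "y \<in> I \<Longrightarrow> z \<in> I \<Longrightarrow> min y z \<in> I \<and> max y z \<in> I"
  by (cases "y \<le> z") (auto simp: min_def max_def)

lemma K_pos: "y \<in> I \<Longrightarrow> z \<in> I \<Longrightarrow> 0 < K y z"
  unfolding K_def' using I_min_max[of y z] P_pos P_lt1 by (simp add: mult_pos_pos)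

lemma K_meas[measurable]: "(\<lambda>(y, z). K y z) \<in> borel_measurable (lborel \<Otimes>\<^sub>M lborel)"
  unfolding K_def' by measurable

lemma K_meas1[measurable]: "K y \<in> borel_measurable borel"
  unfolding K_def' by measurable

definition "c0 = 1 / (P x0 * (1 - P x0))"

lemma c0_pos: "c0 > 0"
  unfolding c0_def using P_pos[OF x0I] P_lt1[OF x0I] by simp

lemma K_le1: "K y z \<le> P z * (1 - P z)"
proof -
  have "P (min y z) \<le> P z" "1 - P (max y z) \<le> 1 - P z"
    by (auto intro!: P_mono)
  then show ?thesis unfolding K_def' using P_nn P_le1
    by (intro mult_mono) auto
qed

lemma K_le2: "P z * (1 - P z) * (P x0 * (1 - P x0)) \<le> K x0 z"
proof (cases "z \<le> x0")
  case True
  then have kx: "K x0 z = P z * (1 - P x0)" unfolding K_def' by (simp add: min_def max_def)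
  have le: "(1 - P z) * P x0 \<le> 1"
    using mult_le_one[of "1 - P z" "P x0"] P_nn[of z] P_nn[of x0] P_le1[of x0] by linarith
  have eq: "P z * (1 - P z) * (P x0 * (1 - P x0)) = (P z * (1 - P x0)) * ((1 - P z) * P x0)"
    by (simp only: mult_ac)
  have nn: "0 \<le> P z * (1 - P x0)" using P_nn[of z] P_le1[of x0] by simp
  show ?thesis unfolding kx eq using mult_left_mono[OF le nn] by simp
next
  case False
  then have kx: "K x0 z = P x0 * (1 - P z)" unfolding K_def' by (simp add: min_def max_def)
  have le: "P z * (1 - P x0) \<le> 1"
    using mult_le_one[of "P z" "1 - P x0"] P_nn[of x0] P_le1[of z] P_le1[of x0] by linarith
  have eq: "P z * (1 - P z) * (P x0 * (1 - P x0)) = (P x0 * (1 - P z)) * (P z * (1 - P x0))"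
    by (simp only: mult_ac)
  have nn: "0 \<le> P x0 * (1 - P z)" using P_nn[of x0] P_le1[of z] by simp
  show ?thesis unfolding kx eq using mult_left_mono[OF le nn] by simp
qed

lemma K_bound: "K y z \<le> c0 * K x0 z"
proof -
  have d: "P x0 * (1 - P x0) > 0" using P_pos[OF x0I] P_lt1[OF x0I] by simp
  have "K y z \<le> P z * (1 - P z)" by (rule K_le1)
  also have "\<dots> \<le> K x0 z / (P x0 * (1 - P x0))"
    using K_le2[of z] d by (simp add: pos_le_divide_eq)
  finally show ?thesis unfolding c0_def by simp
qed

end


lemma abs_prod_le: "2 * \<bar>u * v\<bar> \<le> u\<^sup>2 + (v::real)\<^sup>2"
proof -
  have "0 \<le> (\<bar>u\<bar> - \<bar>v\<bar>)\<^sup>2" by simp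
  then show ?thesis by (simp add: power2_diff abs_mult)
qed

lemma abs_prod_le_q: "0 \<le> (q::real) \<Longrightarrow> \<bar>u * v * q\<bar> \<le> u\<^sup>2 * q + v\<^sup>2 * q"
proof -
  assume q: "0 \<le> q"
  have "\<bar>u * v * q\<bar> = \<bar>u * v\<bar> * q" using q by (simp add: abs_mult)
  also have "\<dots> \<le> (u\<^sup>2 + v\<^sup>2) * q" using abs_prod_le[of u v] q
    by (intro mult_right_mono) auto
  finally show ?thesis by (simp add: algebra_simps)
qed

context S begin

lemma L2q_iff: "L2q f \<longleftrightarrow> f \<in> borel_measurable borel \<and> integrable lborel (\<lambda>y. indicator I y * ((f y)\<^sup>2 * q y))"
  unfolding L2_def si_real ..

lemma L2q_meas: "L2q f \<Longrightarrow> f \<in> borel_measurable borel" unfolding L2q_iff by simp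

lemma AE_q_nn: "AE y in lborel. y \<in> I \<longrightarrow> 0 \<le> q y"
  using AE_pos by eventually_elim auto

lemma L2_int:
  assumes f: "L2q f" and g: "L2q g"
  shows "integrable lborel (\<lambda>y. indicator I y * (f y * g y * q y))"
proof (rule Bochner_Integration.integrable_bound)
  show "integrable lborel (\<lambda>y. indicator I y * ((f y)\<^sup>2 * q y) + indicator I y * ((g y)\<^sup>2 * q y))"
    using f g unfolding L2q_iff by auto
  show "(\<lambda>y. indicator I y * (f y * g y * q y)) \<in> borel_measurable lborel"
    using f g unfolding L2q_iff by auto
  show "AE y in lborel. norm (indicator I y * (f y * g y * q y)) \<le> norm (indicator I y * ((f y)\<^sup>2 * q y) + indicator I y * ((g y)\<^sup>2 * q y))"
    using AE_q_nn
  proof eventually_elim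
    case (elim y)
    show ?case
    proof (cases "y \<in> I")
      case True
      then have "\<bar>f y * g y * q y\<bar> \<le> (f y)\<^sup>2 * q y + (g y)\<^sup>2 * q y" using elim abs_prod_le_q by auto
      then show ?thesis using True by auto
    qed simp
  qed
qed

lemma L2_comb:
  assumes f: "L2q f" and g: "L2q g"
  shows "L2q (\<lambda>y. f y + c * g y)"
proof -
  have "(\<lambda>y. indicator I y * ((f y + c * g y)\<^sup>2 * q y)) =
     (\<lambda>y. indicator I y * (f y * f y * q y) + 2 * c * (indicator I y * (f y * g y * q y)) + c\<^sup>2 * (indicator I y * (g y * g y * q y)))"
    by (auto simp: fun_eq_iff power2_eq_square algebra_simps)
  moreover have "integrable lborel \<dots>"
    using L2_int[OF f f] L2_int[OF f g] L2_int[OF g g] by auto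
  ultimately show ?thesis using f g unfolding L2q_iff by auto
qed

lemma L2_scale: "L2q f \<Longrightarrow> L2q (\<lambda>y. c * f y)"
  using L2_comb[of "\<lambda>_. 0" f c] unfolding L2q_iff by simp

lemma L2_zero: "L2q (\<lambda>_. 0)" unfolding L2q_iff by simp

lemma nsq_ip: "nsq f = ip f f"
  unfolding normsq_def ip_def sli_real by (simp add: power2_eq_square mult.assoc)

lemma ip_sym: "ip f g = ip g f"
  unfolding ip_def by (simp add: mult.commute mult.left_commute)

lemma ip_comb:
  assumes "L2q f" "L2q g" "L2q h"
  shows "ip (\<lambda>y. f y + c * g y) h = ip f h + c * ip g h"
proof -
  have "ip (\<lambda>y. f y + c * g y) h = integral\<^sup>L lborel (\<lambda>y. indicator I y * (f y * h y * q y) + c * (indicator I y * (g y * h y * q y)))"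
    unfolding ip_def by (simp add: algebra_simps)
  also have "\<dots> = ip f h + c * ip g h"
    unfolding ip_def using L2_int[OF assms(1,3)] L2_int[OF assms(2,3)] by simp
  finally show ?thesis .
qed

lemma ip_nn: "0 \<le> ip f f"
  unfolding ip_def
  by (rule integral_nonneg_AE) (use AE_q_nn in \<open>eventually_elim, auto simp: indicator_def\<close>)

lemma nsq_nn: "0 \<le> nsq f" using ip_nn nsq_ip by simp


lemma ip_expand:
  assumes f: "L2q f" and g: "L2q g"
  shows "ip (\<lambda>y. f y + t * g y) (\<lambda>y. f y + t * g y) = ip f f + 2 * t * ip f g + t\<^sup>2 * ip g g"
proof -
  have h: "L2q (\<lambda>y. f y + t * g y)" using L2_comb[OF f g] .
  have "ip (\<lambda>y. f y + t * g y) (\<lambda>y. f y + t * g y) = ip f (\<lambda>y. f y + t * g y) + t * ip g (\<lambda>y. f y + t * g y)"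
    using ip_comb[OF f g h] .
  also have "ip f (\<lambda>y. f y + t * g y) = ip f f + t * ip g f"
    using ip_comb[OF f g f] ip_sym by metis
  also have "ip g (\<lambda>y. f y + t * g y) = ip f g + t * ip g g"
    using ip_comb[OF f g g] ip_sym by metis
  finally show ?thesis using ip_sym[of g f] by (simp add: algebra_simps power2_eq_square)
qed

lemma CS:
  assumes f: "L2q f" and g: "L2q g"
  shows "(ip f g)\<^sup>2 \<le> ip f f * ip g g"
proof -
  have q: "\<And>t. 0 \<le> ip f f + 2 * t * ip f g + t\<^sup>2 * ip g g"
    using ip_expand[OF f g] ip_nn by metis
  show ?thesis
  proof (cases "ip g g = 0")
    case True
    have "ip f g = 0"
    proof (rule ccontr)
      assume ne: "ip f g \<noteq> 0"
      have "0 \<le> ip f f + 2 * (- (ip f f + 1) / (2 * ip f g)) * ip f g"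
        using q[of "- (ip f f + 1) / (2 * ip f g)"] True by simp
      also have "\<dots> = -1" using ne by (simp add: field_simps)
      finally show False by simp
    qed
    then show ?thesis using True by simp
  next
    case False
    then have C: "ip g g > 0" using ip_nn[of g] by simp
    have "0 \<le> ip f f + 2 * (- ip f g / ip g g) * ip f g + (- ip f g / ip g g)\<^sup>2 * ip g g"
      using q .
    also have "\<dots> = ip f f - (ip f g)\<^sup>2 / ip g g"
      using C by (simp add: field_simps power2_eq_square)
    finally have "(ip f g)\<^sup>2 / ip g g \<le> ip f f" by simp
    then show ?thesis using C by (simp add: pos_divide_le_eq mult.commute)
  qed
qed

lemma nsq_zero:
  assumes f: "L2q f" and z: "ip f f = 0"
  shows "AE y in lborel. y \<in> I \<longrightarrow> f y = 0"
proof -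
  have nn: "AE y in lborel. 0 \<le> indicator I y * (f y * f y * q y)"
    using AE_q_nn by eventually_elim (auto simp: indicator_def)
  have "AE y in lborel. indicator I y * (f y * f y * q y) = 0"
    using z integral_nonneg_eq_0_iff_AE[OF L2_int[OF f f] nn] unfolding ip_def by simp
  then show ?thesis using AE_pos by eventually_elim (auto simp: indicator_def)
qed

lemma ip_cong:
  assumes "AE y in lborel. y \<in> I \<longrightarrow> f y = f' y"
    and [measurable]: "f \<in> borel_measurable borel" "f' \<in> borel_measurable borel" "g \<in> borel_measurable borel"
  shows "ip f g = ip f' g"
  unfolding ip_def by (rule integral_cong_AE) (use assms in \<open>auto elim!: AE_mp simp: indicator_def\<close>)

lemma ip_zero:
  assumes "AE y in lborel. y \<in> I \<longrightarrow> f y = 0"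
    and "f \<in> borel_measurable borel" "g \<in> borel_measurable borel"
  shows "ip f g = 0"
  using ip_cong[OF assms(1) assms(2) _ assms(3)] unfolding ip_def by simp

lemma T_def': "T f y = 1 / q y * integral\<^sup>L lborel (\<lambda>z. indicator I z * (K y z * f z))"
  unfolding Lt_def sli_real ..

lemma T_cong:
  assumes "AE z in lborel. z \<in> I \<longrightarrow> f z = g z"
    and [measurable]: "f \<in> borel_measurable borel" "g \<in> borel_measurable borel"
  shows "T f y = T g y"
proof -
  have "integral\<^sup>L lborel (\<lambda>z. indicator I z * (K y z * f z)) = integral\<^sup>L lborel (\<lambda>z. indicator I z * (K y z * g z))"
    by (rule integral_cong_AE) (use assms in \<open>auto elim!: AE_mp simp: indicator_def\<close>)
  then show ?thesis unfolding T_def' by simp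
qed

abbreviation "h0 \<equiv> kw a b p w x0"

lemma Kx0_eq: "q z \<noteq> 0 \<Longrightarrow> K x0 z = h0 z * (q x0 * q z)"
  using px0 wx0 unfolding kw_def kker_def by (simp add: field_simps)

lemma Kf_int0:
  assumes f: "L2q f"
  shows "integrable lborel (\<lambda>z. indicator I z * (K x0 z * f z))"
proof -
  have i: "integrable lborel (\<lambda>z. q x0 * (indicator I z * (h0 z * f z * q z)))"
    using L2_int[OF kwL2 f] by simp
  have ae: "AE z in lborel. q x0 * (indicator I z * (h0 z * f z * q z)) = indicator I z * (K x0 z * f z)"
    using AE_pos by eventually_elim (auto simp: indicator_def Kx0_eq)
  have m: "(\<lambda>z. indicator I z * (K x0 z * f z)) \<in> borel_measurable lborel"
    using L2q_meas[OF f] by measurable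
  show ?thesis by (rule integrable_cong_AE_imp[OF i m ae])
qed

lemma Kf_int:
  assumes f: "L2q f"
  shows "integrable lborel (\<lambda>z. indicator I z * (K y z * f z))"
proof (rule Bochner_Integration.integrable_bound)
  show "integrable lborel (\<lambda>z. c0 * \<bar>indicator I z * (K x0 z * f z)\<bar>)"
    using Kf_int0[OF f] by auto
  show "(\<lambda>z. indicator I z * (K y z * f z)) \<in> borel_measurable lborel"
    using L2q_meas[OF f] by measurable
  show "AE z in lborel. norm (indicator I z * (K y z * f z)) \<le> norm (c0 * \<bar>indicator I z * (K x0 z * f z)\<bar>)"
  proof (intro AE_I2)
    fix z
    have "K y z * \<bar>f z\<bar> \<le> c0 * K x0 z * \<bar>f z\<bar>" using K_bound[of y z] by (intro mult_right_mono) auto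
    then show "norm (indicator I z * (K y z * f z)) \<le> norm (c0 * \<bar>indicator I z * (K x0 z * f z)\<bar>)"
      using K_nn[of y z] K_nn[of x0 z] c0_pos by (auto simp: indicator_def abs_mult)
  qed
qed


lemma E2_L2: "f \<in> E2 a b p w \<Longrightarrow> L2q f" unfolding E2_def by auto
lemma e1L2: "L2q e1" using E2_L2[OF e1E] .

lemma T_lin:
  assumes f: "L2q f" and g: "L2q g"
  shows "T (\<lambda>z. f z + c * g z) y = T f y + c * T g y"
proof -
  have "integral\<^sup>L lborel (\<lambda>z. indicator I z * (K y z * (f z + c * g z))) =
      integral\<^sup>L lborel (\<lambda>z. indicator I z * (K y z * f z) + c * (indicator I z * (K y z * g z)))"
    by (simp add: algebra_simps)
  also have "\<dots> = integral\<^sup>L lborel (\<lambda>z. indicator I z * (K y z * f z)) + c * integral\<^sup>L lborel (\<lambda>z. indicator I z * (K y z * g z))"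
    using Kf_int[OF f, of y] Kf_int[OF g, of y] by simp
  finally show ?thesis unfolding T_def' by (simp add: algebra_simps)
qed

lemma T_meas[measurable]:
  assumes f: "L2q f"
  shows "T f \<in> borel_measurable borel"
proof -
  have [measurable]: "f \<in> borel_measurable borel" using L2q_meas[OF f] .
  have "(\<lambda>y. integral\<^sup>L lborel (\<lambda>z. indicator I z * (K y z * f z))) \<in> borel_measurable borel"
    by measurable
  then show ?thesis unfolding T_def'[abs_def] by measurable
qed

lemma qT: "q y \<noteq> 0 \<Longrightarrow> q y * T f y = integral\<^sup>L lborel (\<lambda>z. indicator I z * (K y z * f z))"
  unfolding T_def' by simp

lemma T_x0:
  assumes f: "L2q f"
  shows "T f x0 = ip h0 f"
proof -
  have q0: "q x0 \<noteq> 0" using px0 wx0 by simp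
  have "integral\<^sup>L lborel (\<lambda>z. indicator I z * (K x0 z * f z)) = integral\<^sup>L lborel (\<lambda>z. q x0 * (indicator I z * (h0 z * f z * q z)))"
  proof (rule integral_cong_AE)
    show "(\<lambda>z. indicator I z * (K x0 z * f z)) \<in> borel_measurable lborel" using L2q_meas[OF f] by measurable
    show "(\<lambda>z. q x0 * (indicator I z * (h0 z * f z * q z))) \<in> borel_measurable lborel"
      using L2q_meas[OF f] L2q_meas[OF kwL2] by measurable
    show "AE z in lborel. indicator I z * (K x0 z * f z) = q x0 * (indicator I z * (h0 z * f z * q z))"
      using AE_pos by eventually_elim (auto simp: indicator_def Kx0_eq)
  qed
  also have "\<dots> = q x0 * ip h0 f" unfolding ip_def by simp
  finally show ?thesis unfolding T_def' using q0 by simp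
qed

lemma T_zero:
  assumes "AE z in lborel. z \<in> I \<longrightarrow> f z = 0" "f \<in> borel_measurable borel"
  shows "T f y = 0"
  using T_cong[OF assms(1) assms(2)] unfolding T_def' by simp

lemma Ke1_nn: "AE z in lborel. 0 \<le> indicator I z * (K y z * e1 z)"
  using AE_pos by eventually_elim (auto simp: indicator_def K_nn)

lemma eig_int: "AE y in lborel. y \<in> I \<longrightarrow> integral\<^sup>L lborel (\<lambda>z. indicator I z * (K y z * e1 z)) = \<kappa> * q y * e1 y"
  using AE_pos
proof eventually_elim
  case (elim y)
  show ?case
  proof
    assume "y \<in> I"
    then have "q y \<noteq> 0" "T e1 y = \<kappa> * e1 y" using elim by auto
    then show "integral\<^sup>L lborel (\<lambda>z. indicator I z * (K y z * e1 z)) = \<kappa> * q y * e1 y"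
      using qT[of y e1] by (simp add: mult_ac)
  qed
qed

lemma kappa_pos: "\<kappa> > 0"
proof -
  have "AE y in lborel. y \<in> I \<longrightarrow> (0 < p y \<and> 0 < w y \<and> 0 < q y \<and> 0 < e1 y \<and> T e1 y = \<kappa> * e1 y) \<and>
     integral\<^sup>L lborel (\<lambda>z. indicator I z * (K y z * e1 z)) = \<kappa> * q y * e1 y"
    using AE_pos eig_int by eventually_elim auto
  from AE_point_exists[OF this I_pos I_meas] obtain y where y: "y \<in> I" "q y > 0" "e1 y > 0"
    "integral\<^sup>L lborel (\<lambda>z. indicator I z * (K y z * e1 z)) = \<kappa> * q y * e1 y" by auto
  have "AE z in lborel. z \<in> I \<longrightarrow> K y z * e1 z > 0"
    using AE_pos by eventually_elim (use y(1) K_pos in auto)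
  from integral_pos_AE[OF I_meas I_pos Kf_int[OF e1L2] this] have "0 < \<kappa> * q y * e1 y" using y(4) by simp
  then show ?thesis using y(2,3) by (simp add: zero_less_mult_iff)
qed

lemma eig_nn: "AE y in lborel. y \<in> I \<longrightarrow> (\<integral>\<^sup>+z. ennreal (indicator I z * (K y z * e1 z)) \<partial>lborel) = ennreal (\<kappa> * q y * e1 y)"
  using eig_int
proof eventually_elim
  case (elim y)
  then show ?case
    using nn_integral_eq_integral[OF Kf_int[OF e1L2] Ke1_nn] by auto
qed

end

context S begin

lemma e1_meas[measurable]: "e1 \<in> borel_measurable borel" using L2q_meas[OF e1L2] .

definition "J f y = (\<integral>\<^sup>+z. ennreal (indicator I z * (K y z * (f z)\<^sup>2 / e1 z)) \<partial>lborel)"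

lemma pw_CS:
  assumes y: "y \<in> I" and fm[measurable]: "f \<in> borel_measurable borel"
    and eq: "(\<integral>\<^sup>+z. ennreal (indicator I z * (K y z * e1 z)) \<partial>lborel) = ennreal (\<kappa> * q y * e1 y)"
  shows "(\<integral>\<^sup>+z. ennreal (indicator I z * (K y z * \<bar>f z\<bar>)) \<partial>lborel)\<^sup>2 \<le> ennreal (\<kappa> * q y * e1 y) * J f y"
proof -
  define F where "F z = ennreal (sqrt (indicator I z * (K y z * e1 z)))" for z
  define G where "G z = ennreal (sqrt (indicator I z * (K y z / e1 z)) * \<bar>f z\<bar>)" for z
  have [measurable]: "F \<in> borel_measurable lborel" "G \<in> borel_measurable lborel"
    unfolding F_def[abs_def] G_def[abs_def] by measurable
  have CS: "(\<integral>\<^sup>+z. F z * G z \<partial>lborel)\<^sup>2 \<le> (\<integral>\<^sup>+z. F z ^ 2 \<partial>lborel) * (\<integral>\<^sup>+z. G z ^ 2 \<partial>lborel)"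
    by (rule Cauchy_Schwarz_nn_integral) auto
  have 1: "(\<integral>\<^sup>+z. F z * G z \<partial>lborel) = (\<integral>\<^sup>+z. ennreal (indicator I z * (K y z * \<bar>f z\<bar>)) \<partial>lborel)"
  proof (rule nn_integral_cong_AE)
    show "AE z in lborel. F z * G z = ennreal (indicator I z * (K y z * \<bar>f z\<bar>))"
      using AE_pos
    proof eventually_elim
      case (elim z)
      show ?case
      proof (cases "z \<in> I")
        case True
        then have e: "e1 z > 0" using elim by auto
        have k: "0 \<le> K y z" by (rule K_nn)
        have "F z * G z = ennreal (sqrt (K y z * e1 z) * (sqrt (K y z / e1 z) * \<bar>f z\<bar>))"
          unfolding F_def G_def using True e k by (simp add: ennreal_mult[symmetric])
        also have "sqrt (K y z * e1 z) * (sqrt (K y z / e1 z) * \<bar>f z\<bar>) = K y z * \<bar>f z\<bar>"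
        proof -
          have "sqrt (K y z * e1 z) * sqrt (K y z / e1 z) = sqrt (K y z * e1 z * (K y z / e1 z))"
            by (rule real_sqrt_mult[symmetric])
          also have "K y z * e1 z * (K y z / e1 z) = (K y z)\<^sup>2" using e by (simp add: power2_eq_square)
          also have "sqrt ((K y z)\<^sup>2) = K y z" using k by simp
          finally have "sqrt (K y z * e1 z) * sqrt (K y z / e1 z) = K y z" .
          then show ?thesis by (simp add: mult.assoc[symmetric])
        qed
        finally show ?thesis using True k by simp
      qed (simp add: F_def G_def)
    qed
  qed
  have 2: "(\<integral>\<^sup>+z. F z ^ 2 \<partial>lborel) = (\<integral>\<^sup>+z. ennreal (indicator I z * (K y z * e1 z)) \<partial>lborel)"
  proof (rule nn_integral_cong_AE)
    show "AE z in lborel. F z ^ 2 = ennreal (indicator I z * (K y z * e1 z))"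
      using AE_pos
    proof eventually_elim
      case (elim z)
      show ?case
      proof (cases "z \<in> I")
        case True
        then have e: "e1 z > 0" using elim by auto
        then have "0 \<le> K y z * e1 z" using K_nn[of y z] by simp
        then show ?thesis unfolding F_def using True by (simp add: ennreal_power)
      qed (simp add: F_def)
    qed
  qed
  have 3: "(\<integral>\<^sup>+z. G z ^ 2 \<partial>lborel) = J f y"
    unfolding J_def
  proof (rule nn_integral_cong_AE)
    show "AE z in lborel. G z ^ 2 = ennreal (indicator I z * (K y z * (f z)\<^sup>2 / e1 z))"
      using AE_pos
    proof eventually_elim
      case (elim z)
      show ?case
      proof (cases "z \<in> I")
        case True
        then have e: "e1 z > 0" using elim by auto
        then have nn: "0 \<le> K y z / e1 z" using K_nn[of y z] by simp
        then have "G z ^ 2 = ennreal ((sqrt (K y z / e1 z) * \<bar>f z\<bar>)\<^sup>2)"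
          unfolding G_def using True by (simp add: ennreal_power)
        also have "(sqrt (K y z / e1 z) * \<bar>f z\<bar>)\<^sup>2 = K y z * (f z)\<^sup>2 / e1 z"
          using nn by (simp add: power_mult_distrib)
        finally show ?thesis using True by simp
      qed (simp add: G_def)
    qed
  qed
  show ?thesis using CS unfolding 1 2 3 eq .
qed


lemma e1_meas_l[measurable]: "e1 \<in> borel_measurable lborel" by simp

lemma J_meas[measurable]:
  assumes [measurable]: "f \<in> borel_measurable borel"
  shows "J f \<in> borel_measurable borel"
proof -
  have [measurable]: "f \<in> borel_measurable lborel" by simp
  show ?thesis unfolding J_def[abs_def] by measurable
qed

lemma pw_T:
  assumes f: "L2q f"
  shows "AE y in lborel. ennreal (indicator I y * ((T f y)\<^sup>2 * q y)) \<le> ennreal (indicator I y * (\<kappa> * e1 y)) * J f y"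
  using AE_pos eig_nn
proof eventually_elim
  case (elim y)
  show ?case
  proof (cases "y \<in> I")
    case True
    have fm[measurable]: "f \<in> borel_measurable borel" using L2q_meas[OF f] .
    have qy: "q y > 0" "e1 y > 0" using elim True by auto
    have eq: "(\<integral>\<^sup>+z. ennreal (indicator I z * (K y z * e1 z)) \<partial>lborel) = ennreal (\<kappa> * q y * e1 y)"
      using elim True by auto
    define A where "A = (\<integral>\<^sup>+z. ennreal (indicator I z * (K y z * \<bar>f z\<bar>)) \<partial>lborel)"
    have "ennreal (norm (integral\<^sup>L lborel (\<lambda>z. indicator I z * (K y z * f z)))) \<le> (\<integral>\<^sup>+z. norm (indicator I z * (K y z * f z)) \<partial>lborel)"
      using integral_norm_bound_ennreal[OF Kf_int[OF f, of y]] .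
    also have "(\<integral>\<^sup>+z. norm (indicator I z * (K y z * f z)) \<partial>lborel) = A"
      unfolding A_def by (intro nn_integral_cong) (auto simp: indicator_def abs_mult K_nn)
    moreover have "q y * T f y = integral\<^sup>L lborel (\<lambda>z. indicator I z * (K y z * f z))"
      by (rule qT) (use qy in linarith)
    ultimately have "ennreal \<bar>q y * T f y\<bar> \<le> A" by simp
    then have "(ennreal \<bar>q y * T f y\<bar>)\<^sup>2 \<le> A\<^sup>2" by (simp add: power_mono)
    also have "A\<^sup>2 \<le> ennreal (\<kappa> * q y * e1 y) * J f y"
      unfolding A_def by (rule pw_CS[OF True fm eq])
    finally have le: "(ennreal \<bar>q y * T f y\<bar>)\<^sup>2 \<le> ennreal (\<kappa> * q y * e1 y) * J f y" .
    have "(ennreal \<bar>q y * T f y\<bar>)\<^sup>2 = ennreal ((q y * T f y)\<^sup>2)"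
      by (simp add: ennreal_power)
    also have "(q y * T f y)\<^sup>2 = q y * ((T f y)\<^sup>2 * q y)" by (simp add: power2_eq_square)
    also have "ennreal (q y * ((T f y)\<^sup>2 * q y)) = ennreal (q y) * ennreal ((T f y)\<^sup>2 * q y)"
      by (rule ennreal_mult') (use qy in simp)
    finally have l: "(ennreal \<bar>q y * T f y\<bar>)\<^sup>2 = ennreal (q y) * ennreal ((T f y)\<^sup>2 * q y)" .
    have r: "ennreal (\<kappa> * q y * e1 y) * J f y = ennreal (q y) * (ennreal (\<kappa> * e1 y) * J f y)"
    proof -
      have "ennreal (\<kappa> * q y * e1 y) = ennreal (q y) * ennreal (\<kappa> * e1 y)"
        using qy kappa_pos by (simp add: ennreal_mult[symmetric] mult_ac)
      then show ?thesis by (simp add: mult.assoc)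
    qed
    have "ennreal ((T f y)\<^sup>2 * q y) \<le> ennreal (\<kappa> * e1 y) * J f y"
    proof -
      have "ennreal (q y) \<noteq> 0" "ennreal (q y) \<noteq> top" using qy by auto
      from ennreal_mult_le_mult_iff[OF this] show ?thesis using le unfolding l r by simp
    qed
    then show ?thesis using True by simp
  qed simp
qed


lemma nsq_int: "nsq f = integral\<^sup>L lborel (\<lambda>z. indicator I z * ((f z)\<^sup>2 * q z))"
  unfolding normsq_def sli_real by (simp add: mult.assoc)

lemma nsq_nn_int:
  assumes f: "L2q f"
  shows "(\<integral>\<^sup>+z. ennreal (indicator I z * ((f z)\<^sup>2 * q z)) \<partial>lborel) = ennreal (nsq f)"
proof -
  have i: "integrable lborel (\<lambda>z. indicator I z * ((f z)\<^sup>2 * q z))" using f unfolding L2q_iff by simp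
  have nn: "AE z in lborel. 0 \<le> indicator I z * ((f z)\<^sup>2 * q z)"
    using AE_q_nn by eventually_elim (auto simp: indicator_def)
  show ?thesis unfolding nsq_int using nn_integral_eq_integral[OF i nn] .
qed

lemma K_meas_l[measurable]: "(\<lambda>(y, z). K y z) \<in> borel_measurable (lborel \<Otimes>\<^sub>M lborel)"
  by (rule K_meas)

lemma Schur_nn:
  assumes f: "L2q f"
  shows "(\<integral>\<^sup>+y. ennreal (indicator I y * ((T f y)\<^sup>2 * q y)) \<partial>lborel) \<le> ennreal (\<kappa>\<^sup>2 * nsq f)"
proof -
  have fm[measurable]: "f \<in> borel_measurable borel" using L2q_meas[OF f] .
  have fml[measurable]: "f \<in> borel_measurable lborel" by simp
  have pl[measurable]: "p \<in> borel_measurable lborel" "w \<in> borel_measurable lborel" by simp_all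
  define H where "H y z = ennreal (\<kappa> * indicator I y * e1 y * (indicator I z * (K y z * (f z)\<^sup>2 / e1 z)))" for y z
  have Hm[measurable]: "case_prod H \<in> borel_measurable (lborel \<Otimes>\<^sub>M lborel)"
    unfolding H_def by measurable
  have "(\<integral>\<^sup>+y. ennreal (indicator I y * ((T f y)\<^sup>2 * q y)) \<partial>lborel) \<le>
      (\<integral>\<^sup>+y. ennreal (indicator I y * (\<kappa> * e1 y)) * J f y \<partial>lborel)"
    by (rule nn_integral_mono_AE[OF pw_T[OF f]])
  also have "\<dots> = (\<integral>\<^sup>+y. (\<integral>\<^sup>+z. H y z \<partial>lborel) \<partial>lborel)"
  proof (rule nn_integral_cong_AE)
    show "AE y in lborel. ennreal (indicator I y * (\<kappa> * e1 y)) * J f y = (\<integral>\<^sup>+z. H y z \<partial>lborel)"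
      using AE_pos
    proof eventually_elim
      case (elim y)
      show ?case
      proof (cases "y \<in> I")
        case True
        then have e: "0 \<le> indicator I y * (\<kappa> * e1 y)" using elim kappa_pos by simp
        have "ennreal (indicator I y * (\<kappa> * e1 y)) * J f y =
           (\<integral>\<^sup>+z. ennreal (indicator I y * (\<kappa> * e1 y)) * ennreal (indicator I z * (K y z * (f z)\<^sup>2 / e1 z)) \<partial>lborel)"
          unfolding J_def by (rule nn_integral_cmult[symmetric]) measurable
        also have "\<dots> = (\<integral>\<^sup>+z. H y z \<partial>lborel)"
          unfolding H_def using e by (intro nn_integral_cong) (simp add: ennreal_mult'[symmetric] mult_ac)
        finally show ?thesis .
      qed (simp add: H_def)
    qed
  qed
  also have "\<dots> = (\<integral>\<^sup>+z. (\<integral>\<^sup>+y. H y z \<partial>lborel) \<partial>lborel)"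
    by (rule lborel_pair.Fubini'[symmetric]) (rule Hm)
  also have "\<dots> = (\<integral>\<^sup>+z. ennreal (\<kappa>\<^sup>2) * ennreal (indicator I z * ((f z)\<^sup>2 * q z)) \<partial>lborel)"
  proof (rule nn_integral_cong_AE)
    show "AE z in lborel. (\<integral>\<^sup>+y. H y z \<partial>lborel) = ennreal (\<kappa>\<^sup>2) * ennreal (indicator I z * ((f z)\<^sup>2 * q z))"
      using AE_pos eig_nn
    proof eventually_elim
      case (elim z)
      show ?case
      proof (cases "z \<in> I")
        case True
        then have e: "e1 z > 0" "q z > 0" using elim by auto
        define c where "c = \<kappa> * ((f z)\<^sup>2 / e1 z)"
        have c: "0 \<le> c" unfolding c_def using e kappa_pos by simp
        have "(\<integral>\<^sup>+y. H y z \<partial>lborel) = (\<integral>\<^sup>+y. ennreal c * ennreal (indicator I y * (K z y * e1 y)) \<partial>lborel)"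
          unfolding H_def c_def using True c
          by (intro nn_integral_cong) (simp add: ennreal_mult'[symmetric] K_sym[of z] c_def mult_ac)
        also have "\<dots> = ennreal c * ennreal (\<kappa> * q z * e1 z)"
          using elim True by (subst nn_integral_cmult) auto
        also have "\<dots> = ennreal (c * (\<kappa> * q z * e1 z))" using c by (simp add: ennreal_mult')
        also have "c * (\<kappa> * q z * e1 z) = \<kappa>\<^sup>2 * ((f z)\<^sup>2 * q z)"
          unfolding c_def using e by (simp add: field_simps power2_eq_square)
        finally show ?thesis using True by (simp add: ennreal_mult')
      qed (simp add: H_def)
    qed
  qed
  also have "\<dots> = ennreal (\<kappa>\<^sup>2) * ennreal (nsq f)"
    by (subst nn_integral_cmult) (auto simp: nsq_nn_int[OF f])
  also have "\<dots> = ennreal (\<kappa>\<^sup>2 * nsq f)" by (simp add: ennreal_mult')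
  finally show ?thesis .
qed


lemma Schur:
  assumes f: "L2q f"
  shows "L2q (T f)" "nsq (T f) \<le> \<kappa>\<^sup>2 * nsq f"
proof -
  have m[measurable]: "T f \<in> borel_measurable borel" using T_meas[OF f] .
  have nn: "AE y in lborel. 0 \<le> indicator I y * ((T f y)\<^sup>2 * q y)"
    using AE_q_nn by eventually_elim (auto simp: indicator_def)
  have eq: "(\<integral>\<^sup>+y. ennreal (norm (indicator I y * ((T f y)\<^sup>2 * q y))) \<partial>lborel) =
      (\<integral>\<^sup>+y. ennreal (indicator I y * ((T f y)\<^sup>2 * q y)) \<partial>lborel)"
    by (rule nn_integral_cong_AE) (use nn in \<open>eventually_elim, simp\<close>)
  have i: "integrable lborel (\<lambda>y. indicator I y * ((T f y)\<^sup>2 * q y))"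
  proof (rule integrableI_bounded)
    show "(\<lambda>y. indicator I y * ((T f y)\<^sup>2 * q y)) \<in> borel_measurable lborel" by measurable
    show "(\<integral>\<^sup>+y. ennreal (norm (indicator I y * ((T f y)\<^sup>2 * q y))) \<partial>lborel) < \<infinity>"
      unfolding eq using Schur_nn[OF f] by (simp add: le_less_trans)
  qed
  then show "L2q (T f)" unfolding L2q_iff by simp
  have "ennreal (nsq (T f)) = (\<integral>\<^sup>+y. ennreal (indicator I y * ((T f y)\<^sup>2 * q y)) \<partial>lborel)"
    unfolding nsq_int using nn_integral_eq_integral[OF i nn] by simp
  also have "\<dots> \<le> ennreal (\<kappa>\<^sup>2 * nsq f)" by (rule Schur_nn[OF f])
  finally show "nsq (T f) \<le> \<kappa>\<^sup>2 * nsq f" using nsq_nn[of f] by (simp add: ennreal_le_iff)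
qed

lemma L2_abs: assumes f: "L2q f" shows "L2q (\<lambda>y. \<bar>f y\<bar>)"
proof -
  have [measurable]: "f \<in> borel_measurable borel" using L2q_meas[OF f] .
  have "(\<lambda>y. \<bar>f y\<bar>) \<in> borel_measurable borel" by measurable
  then show ?thesis using f unfolding L2q_iff by simp
qed

lemma T_abs_meas: "L2q u \<Longrightarrow> T (\<lambda>z. \<bar>u z\<bar>) \<in> borel_measurable borel"
  using T_meas[OF L2_abs] by simp

lemma adj:
  assumes u: "L2q u" and v: "L2q v"
  shows "ip (T u) v = ip u (T v)"
proof -
  have um[measurable]: "u \<in> borel_measurable lborel" "u \<in> borel_measurable borel" using L2q_meas[OF u] by simp_all
  have vm[measurable]: "v \<in> borel_measurable lborel" "v \<in> borel_measurable borel" using L2q_meas[OF v] by simp_all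
  have pl[measurable]: "p \<in> borel_measurable lborel" "w \<in> borel_measurable lborel" by simp_all
  define F where "F y z = indicator I y * indicator I z * K y z * u z * v y" for y z
  have Fm[measurable]: "(\<lambda>(y, z). F y z) \<in> borel_measurable (lborel \<Otimes>\<^sub>M lborel)"
    unfolding F_def by measurable
  have au: "L2q (\<lambda>z. \<bar>u z\<bar>)" using L2_abs[OF u] .
  have Tau: "L2q (T (\<lambda>z. \<bar>u z\<bar>))" using Schur(1)[OF au] .
  have Taum[measurable]: "T (\<lambda>z. \<bar>u z\<bar>) \<in> borel_measurable lborel" using L2q_meas[OF Tau] by simp
  have intF: "integrable (lborel \<Otimes>\<^sub>M lborel) (\<lambda>(y, z). F y z)"
  proof (rule lborel_pair.Fubini_integrable)
    show "(\<lambda>(y, z). F y z) \<in> borel_measurable (lborel \<Otimes>\<^sub>M lborel)" by (rule Fm)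
    show "AE y in lborel. integrable lborel (\<lambda>z. case (y, z) of (y, z) \<Rightarrow> F y z)"
    proof (intro AE_I2)
      fix y
      have "integrable lborel (\<lambda>z. (indicator I y * v y) * (indicator I z * (K y z * u z)))"
        using Kf_int[OF u, of y] by simp
      then show "integrable lborel (\<lambda>z. case (y, z) of (y, z) \<Rightarrow> F y z)"
        unfolding F_def by (simp add: mult_ac)
    qed
    have i2: "integrable lborel (\<lambda>y. indicator I y * (\<bar>v y\<bar> * T (\<lambda>z. \<bar>u z\<bar>) y * q y))"
      using L2_int[OF L2_abs[OF v] Tau] .
    show "integrable lborel (\<lambda>y. LBINT z. norm (case (y, z) of (y, z) \<Rightarrow> F y z))"
    proof (rule integrable_cong_AE_imp[OF i2])
      show "(\<lambda>y. LBINT z. norm (case (y, z) of (y, z) \<Rightarrow> F y z)) \<in> borel_measurable lborel"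
        by measurable
      show "AE y in lborel. indicator I y * (\<bar>v y\<bar> * T (\<lambda>z. \<bar>u z\<bar>) y * q y) = (LBINT z. norm (case (y, z) of (y, z) \<Rightarrow> F y z))"
        using AE_pos
      proof eventually_elim
        case (elim y)
        show ?case
        proof (cases "y \<in> I")
          case True
          then have qy: "q y \<noteq> 0" using elim by auto
          have "(LBINT z. norm (case (y, z) of (y, z) \<Rightarrow> F y z)) = (LBINT z. \<bar>v y\<bar> * (indicator I z * (K y z * \<bar>u z\<bar>)))"
            unfolding F_def using True by (intro Bochner_Integration.integral_cong) (auto simp: abs_mult K_nn indicator_def)
          also have "\<dots> = \<bar>v y\<bar> * (q y * T (\<lambda>z. \<bar>u z\<bar>) y)"
            using qT[OF qy, of "\<lambda>z. \<bar>u z\<bar>"] by simp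
          finally show ?thesis using True by (simp add: mult_ac)
        qed (simp add: F_def)
      qed
    qed
  qed
  have "ip (T u) v = (LBINT y. (LBINT z. F y z))"
    unfolding ip_def
  proof (rule integral_cong_AE)
    show "(\<lambda>y. indicator I y * (T u y * v y * q y)) \<in> borel_measurable lborel"
      using T_meas[OF u] by measurable
    show "(\<lambda>y. LBINT z. F y z) \<in> borel_measurable lborel" by measurable
    show "AE y in lborel. indicator I y * (T u y * v y * q y) = (LBINT z. F y z)"
      using AE_pos
    proof eventually_elim
      case (elim y)
      show ?case
      proof (cases "y \<in> I")
        case True
        then have qy: "q y \<noteq> 0" using elim by auto
        have "(LBINT z. F y z) = (LBINT z. v y * (indicator I z * (K y z * u z)))"
          unfolding F_def using True by (simp add: mult_ac)
        also have "\<dots> = v y * (q y * T u y)" using qT[OF qy, of u] by simp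
        finally show ?thesis using True by (simp add: mult_ac)
      qed (simp add: F_def)
    qed
  qed
  also have "\<dots> = (LBINT z. (LBINT y. F y z))"
    by (rule lborel_pair.Fubini_integral[symmetric]) (use intF in simp)
  also have "\<dots> = ip u (T v)"
    unfolding ip_def
  proof (rule integral_cong_AE)
    show "(\<lambda>z. indicator I z * (u z * T v z * q z)) \<in> borel_measurable lborel"
      using T_meas[OF v] by measurable
    show "(\<lambda>z. LBINT y. F y z) \<in> borel_measurable lborel" by measurable
    show "AE z in lborel. (LBINT y. F y z) = indicator I z * (u z * T v z * q z)"
      using AE_pos
    proof eventually_elim
      case (elim z)
      show ?case
      proof (cases "z \<in> I")
        case True
        then have qz: "q z \<noteq> 0" using elim by auto
        have "(LBINT y. F y z) = (LBINT y. u z * (indicator I y * (K z y * v y)))"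
          unfolding F_def using True by (simp add: mult_ac K_sym[of z])
        also have "\<dots> = u z * (q z * T v z)" using qT[OF qz, of v] by simp
        finally show ?thesis using True by (simp add: mult_ac)
      qed (simp add: F_def)
    qed
  qed
  finally show ?thesis .
qed

end

context S begin

lemma ip_scale: "ip (\<lambda>z. c * g z) h = c * ip g h"
  unfolding ip_def by (simp add: mult_ac)

lemma div_abs_le: "0 < (Qv::real) \<Longrightarrow> \<bar>X\<bar> \<le> Y \<Longrightarrow> \<bar>1 / Qv * X\<bar> \<le> 1 / Qv * Y"
  by (simp add: abs_mult divide_right_mono)

lemma T_abs_le:
  assumes g: "L2q g" and qy: "q y > 0"
  shows "\<bar>T g y\<bar> \<le> T (\<lambda>z. \<bar>g z\<bar>) y"
proof -
  have "\<bar>integral\<^sup>L lborel (\<lambda>z. indicator I z * (K y z * g z))\<bar> \<le> integral\<^sup>L lborel (\<lambda>z. norm (indicator I z * (K y z * g z)))"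
    using integral_norm_bound[of lborel "\<lambda>z. indicator I z * (K y z * g z)"] by simp
  also have "\<dots> = integral\<^sup>L lborel (\<lambda>z. indicator I z * (K y z * \<bar>g z\<bar>))"
    by (intro Bochner_Integration.integral_cong) (auto simp: abs_mult K_nn indicator_def)
  finally have "\<bar>integral\<^sup>L lborel (\<lambda>z. indicator I z * (K y z * g z))\<bar> \<le> integral\<^sup>L lborel (\<lambda>z. indicator I z * (K y z * \<bar>g z\<bar>))" .
  then show ?thesis unfolding T_def' by (rule div_abs_le[OF qy])
qed

lemma perron:
  assumes g: "L2q g" and o: "ip g e1 = 0"
    and ev: "AE y in lborel. y \<in> I \<longrightarrow> T g y = \<mu> * g y" and mu: "\<bar>\<mu>\<bar> = \<kappa>"
  shows "AE y in lborel. y \<in> I \<longrightarrow> g y = 0"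
proof -
  define ag where "ag z = \<bar>g z\<bar>" for z
  have ag: "L2q ag" unfolding ag_def using L2_abs[OF g] .
  have gm[measurable]: "g \<in> borel_measurable borel" using L2q_meas[OF g] .
  have agm[measurable]: "ag \<in> borel_measurable borel" using L2q_meas[OF ag] .
  have Tag: "L2q (T ag)" using Schur(1)[OF ag] .
  have Tagm[measurable]: "T ag \<in> borel_measurable borel" using L2q_meas[OF Tag] .
  have le: "AE y in lborel. y \<in> I \<longrightarrow> \<kappa> * ag y \<le> T ag y \<and> \<kappa> * ag y = \<bar>T g y\<bar>"
    using AE_pos ev
  proof eventually_elim
    case (elim y)
    show ?case
    proof
      assume y: "y \<in> I"
      then have "\<bar>T g y\<bar> = \<kappa> * ag y" using elim mu unfolding ag_def by (simp add: abs_mult)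
      moreover have "\<bar>T g y\<bar> \<le> T ag y"
      proof -
        have qy: "q y > 0" using elim y by auto
        show ?thesis unfolding ag_def by (rule T_abs_le[OF g qy])
      qed
      ultimately show "\<kappa> * ag y \<le> T ag y \<and> \<kappa> * ag y = \<bar>T g y\<bar>" by simp
    qed
  qed
  have "ip (T ag) e1 = ip ag (T e1)" using adj[OF ag e1L2] .
  also have "\<dots> = ip (T e1) ag" by (rule ip_sym)
  also have "\<dots> = ip (\<lambda>y. \<kappa> * e1 y) ag"
  proof (rule ip_cong)
    show "AE y in lborel. y \<in> I \<longrightarrow> T e1 y = \<kappa> * e1 y" using AE_pos by eventually_elim auto
    show "T e1 \<in> borel_measurable borel" by (rule T_meas[OF e1L2])
    show "(\<lambda>y. \<kappa> * e1 y) \<in> borel_measurable borel" by measurable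
    show "ag \<in> borel_measurable borel" by measurable
  qed
  also have "\<dots> = \<kappa> * ip ag e1" by (simp add: ip_scale ip_sym)
  finally have a1: "ip (T ag) e1 = \<kappa> * ip ag e1" .
  define D where "D y = T ag y + (- \<kappa>) * ag y" for y
  have "ip D e1 = ip (T ag) e1 + (-\<kappa>) * ip ag e1" unfolding D_def by (rule ip_comb[OF Tag ag e1L2])
  then have D0: "ip D e1 = 0" using a1 by simp
  have DL: "L2q D" unfolding D_def by (rule L2_comb[OF Tag ag])
  have Dnn: "AE y in lborel. 0 \<le> indicator I y * (D y * e1 y * q y)"
    using le AE_pos by eventually_elim (auto simp: D_def indicator_def)
  have "AE y in lborel. indicator I y * (D y * e1 y * q y) = 0"
    using integral_nonneg_eq_0_iff_AE[OF L2_int[OF DL e1L2] Dnn] D0 unfolding ip_def by simp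
  then have "AE y in lborel. y \<in> I \<longrightarrow> T ag y = \<bar>T g y\<bar>"
    using le AE_pos by eventually_elim (auto simp: D_def indicator_def)
  then have "AE y in lborel. y \<in> I \<longrightarrow> T ag y = \<bar>T g y\<bar> \<and> q y > 0"
    using AE_pos by eventually_elim auto
  from AE_point_exists[OF this I_pos I_meas] obtain y where y: "y \<in> I" "T ag y = \<bar>T g y\<bar>" "q y > 0" by auto
  define X where "X = integral\<^sup>L lborel (\<lambda>z. indicator I z * (K y z * g z))"
  define Y where "Y = integral\<^sup>L lborel (\<lambda>z. indicator I z * (K y z * ag z))"
  have "q y * T ag y = Y" unfolding Y_def by (rule qT) (use y in linarith)
  moreover have "q y * T g y = X" unfolding X_def by (rule qT) (use y in linarith)
  ultimately have XY: "Y = \<bar>X\<bar>" using y by (metis abs_mult abs_of_pos)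
  define s where "s = (if X \<ge> 0 then 1 else (-1::real))"
  have sX: "s * X = \<bar>X\<bar>" and s1: "\<bar>s\<bar> = 1" unfolding s_def by auto
  have "integral\<^sup>L lborel (\<lambda>z. indicator I z * (K y z * (ag z + (-s) * g z))) = Y + (-s) * X"
  proof -
    have "integral\<^sup>L lborel (\<lambda>z. indicator I z * (K y z * (ag z + (-s) * g z))) =
        integral\<^sup>L lborel (\<lambda>z. indicator I z * (K y z * ag z) + (-s) * (indicator I z * (K y z * g z)))"
      by (simp add: algebra_simps)
    also have "\<dots> = Y + (-s) * X"
      unfolding X_def Y_def using Kf_int[OF ag, of y] Kf_int[OF g, of y] by simp
    finally show ?thesis .
  qed
  also have "\<dots> = 0" using XY sX by simp
  finally have Z: "integral\<^sup>L lborel (\<lambda>z. indicator I z * (K y z * (ag z + (-s) * g z))) = 0" .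
  have nn: "AE z in lborel. 0 \<le> indicator I z * (K y z * (ag z + (-s) * g z))"
  proof (intro AE_I2)
    fix z
    have "s * g z \<le> ag z" unfolding ag_def using s1 by (metis abs_ge_self abs_mult mult_1)
    then show "0 \<le> indicator I z * (K y z * (ag z + (-s) * g z))" using K_nn[of y z] by (simp add: indicator_def)
  qed
  have "AE z in lborel. indicator I z * (K y z * (ag z + (-s) * g z)) = 0"
    using integral_nonneg_eq_0_iff_AE[OF Kf_int[OF L2_comb[OF ag g]] nn] Z by simp
  then have sg: "AE z in lborel. z \<in> I \<longrightarrow> s * g z = ag z"
  proof eventually_elim
    case (elim z)
    show ?case
    proof
      assume z: "z \<in> I"
      then have "K y z > 0" using K_pos y(1) by simp
      then show "s * g z = ag z" using elim z by simp
    qed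
  qed
  have "ip (\<lambda>z. s * g z) e1 = 0" using o by (simp add: ip_scale)
  moreover have snn: "AE z in lborel. 0 \<le> indicator I z * (s * g z * e1 z * q z)"
    using sg AE_pos by eventually_elim (auto simp: indicator_def ag_def)
  ultimately have "AE z in lborel. indicator I z * (s * g z * e1 z * q z) = 0"
    using integral_nonneg_eq_0_iff_AE[OF L2_int[OF L2_scale[OF g] e1L2] snn] unfolding ip_def by simp
  moreover have s0: "s \<noteq> 0" using s1 by auto
  ultimately show ?thesis using AE_pos by eventually_elim (use s0 in \<open>auto simp: indicator_def\<close>)
qed

end


lemma L2w_int:
  assumes F: "L2 a b r F" and G: "L2 a b r G" and r: "AE y in lborel. y \<in> Ioi a b \<longrightarrow> 0 \<le> r y"
    and rm[measurable]: "r \<in> borel_measurable borel"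
  shows "integrable lborel (\<lambda>y. indicator (Ioi a b) y * (F y * G y * r y))"
proof (rule Bochner_Integration.integrable_bound)
  show "integrable lborel (\<lambda>y. indicator (Ioi a b) y * ((F y)\<^sup>2 * r y) + indicator (Ioi a b) y * ((G y)\<^sup>2 * r y))"
    using F G unfolding L2_def si_real by auto
  have [measurable]: "F \<in> borel_measurable borel" "G \<in> borel_measurable borel" using F G unfolding L2_def by auto
  show "(\<lambda>y. indicator (Ioi a b) y * (F y * G y * r y)) \<in> borel_measurable lborel"
    by measurable
  show "AE y in lborel. norm (indicator (Ioi a b) y * (F y * G y * r y)) \<le> norm (indicator (Ioi a b) y * ((F y)\<^sup>2 * r y) + indicator (Ioi a b) y * ((G y)\<^sup>2 * r y))"
    using r
  proof eventually_elim
    case (elim y)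
    show ?case
    proof (cases "y \<in> Ioi a b")
      case True
      then have "\<bar>F y * G y * r y\<bar> \<le> (F y)\<^sup>2 * r y + (G y)\<^sup>2 * r y" using elim abs_prod_le_q by auto
      then show ?thesis using True by auto
    qed simp
  qed
qed

lemma L2w_comb:
  assumes F: "L2 a b r F" and G: "L2 a b r G" and r: "AE y in lborel. y \<in> Ioi a b \<longrightarrow> 0 \<le> r y"
    and rm[measurable]: "r \<in> borel_measurable borel"
  shows "L2 a b r (\<lambda>y. F y + c * G y)"
proof -
  have [measurable]: "F \<in> borel_measurable borel" "G \<in> borel_measurable borel" using F G unfolding L2_def by auto
  have "(\<lambda>y. indicator (Ioi a b) y * ((F y + c * G y)\<^sup>2 * r y)) =
     (\<lambda>y. indicator (Ioi a b) y * (F y * F y * r y) + 2 * c * (indicator (Ioi a b) y * (F y * G y * r y)) + c\<^sup>2 * (indicator (Ioi a b) y * (G y * G y * r y)))"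
    by (auto simp: fun_eq_iff power2_eq_square algebra_simps)
  moreover have "integrable lborel \<dots>"
    using L2w_int[OF F F r rm] L2w_int[OF F G r rm] L2w_int[OF G G r rm] by auto
  moreover have "(\<lambda>y. F y + c * G y) \<in> borel_measurable borel" by measurable
  ultimately show ?thesis unfolding L2_def si_real by auto
qed

lemma L2w_cong:
  assumes G: "L2 a b r G" and Fm: "F \<in> borel_measurable borel" and eq: "\<And>x. x \<in> Ioi a b \<Longrightarrow> F x = G x"
  shows "L2 a b r F"
proof -
  have "(\<lambda>y. indicator (Ioi a b) y * ((F y)\<^sup>2 * r y)) = (\<lambda>y. indicator (Ioi a b) y * ((G y)\<^sup>2 * r y))"
    using eq by (auto simp: fun_eq_iff indicator_def)
  then show ?thesis using G Fm unfolding L2_def si_real by simp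
qed

lemma prim_meas:
  fixes h :: "real \<Rightarrow> real"
  assumes hm[measurable]: "h \<in> borel_measurable borel"
  shows "(\<lambda>x. LBINT y=ereal x1..ereal x. h y) \<in> borel_measurable borel"
proof -
  have eq: "(LBINT y=ereal x1..ereal x. h y) =
    (if x1 \<le> x then integral\<^sup>L lborel (\<lambda>y. if x1 < y \<and> y < x then h y else 0)
     else - integral\<^sup>L lborel (\<lambda>y. if x < y \<and> y < x1 then h y else 0))" for x
    unfolding interval_lebesgue_integral_def
    by (auto simp: sli_real intro!: arg_cong[where f="integral\<^sup>L lborel"] simp: fun_eq_iff indicator_def)
  have [measurable]: "h \<in> borel_measurable lborel" by simp
  have 1: "(\<lambda>x. integral\<^sup>L lborel (\<lambda>y. if x1 < y \<and> y < x then h y else 0)) \<in> borel_measurable borel"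
    by measurable
  have 2: "(\<lambda>x. integral\<^sup>L lborel (\<lambda>y. if x < y \<and> y < x1 then h y else 0)) \<in> borel_measurable borel"
    by measurable
  show ?thesis unfolding eq using 1 2 by measurable
qed

context S begin

lemma loc_int_comb:
  assumes "loc_int a b f" "loc_int a b g"
  shows "loc_int a b (\<lambda>y. f y + c * g y)"
  using assms unfolding loc_int_def by (auto intro!: set_integral_add set_integrable_mult_right)

lemma loc_ii:
  assumes f: "loc_int a b f" and u: "u \<in> I" and v: "v \<in> I"
  shows "interval_lebesgue_integrable lborel (ereal u) (ereal v) f"
proof (cases "u \<le> v")
  case True
  have "set_integrable lborel {u..v} f" using f u v unfolding loc_int_def Ioi_def by auto
  then have "set_integrable lborel {u<..<v} f" by (rule set_integrable_subset) auto
  then show ?thesis using True unfolding interval_lebesgue_integrable_def by simp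
next
  case False
  have "set_integrable lborel {v..u} f" using f u v unfolding loc_int_def Ioi_def by auto
  then have "set_integrable lborel {v<..<u} f" by (rule set_integrable_subset) auto
  then show ?thesis using False unfolding interval_lebesgue_integrable_def by simp
qed

lemma AE_p_nn': "AE y in lborel. y \<in> I \<longrightarrow> 0 \<le> p y"
  using AE_pos by eventually_elim auto

lemma L2p_const: "L2 a b p (\<lambda>_. k)"
proof -
  have "integrable lborel (\<lambda>y. k\<^sup>2 * (indicator I y * p y))" using p_int by simp
  then show ?thesis unfolding L2_def si_real by (simp add: mult.left_commute)
qed

lemma E2_comb:
  assumes f: "f \<in> E2 a b p w" and g: "g \<in> E2 a b p w"
  shows "(\<lambda>y. f y + c * g y) \<in> E2 a b p w"
proof -
  have fL: "L2q f" and gL: "L2q g" using f g by (auto simp: E2_def)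
  have fl: "loc_int a b f" and gl: "loc_int a b g" using f g by (auto simp: E2_def)
  obtain x1 where x1: "x1 \<in> I" "L2 a b p (\<lambda>x. LBINT y=ereal x1..ereal x. f y)" using f by (auto simp: E2_def)
  obtain x2 where x2: "x2 \<in> I" "L2 a b p (\<lambda>x. LBINT y=ereal x2..ereal x. g y)" using g by (auto simp: E2_def)
  define k where "k = (LBINT y=ereal x2..ereal x1. g y)"
  have [measurable]: "f \<in> borel_measurable borel" "g \<in> borel_measurable borel" using fL gL by (auto dest: L2q_meas)
  have hm: "(\<lambda>y. f y + c * g y) \<in> borel_measurable borel" by measurable
  have L: "L2 a b p (\<lambda>x. (LBINT y=ereal x1..ereal x. f y) + c * ((LBINT y=ereal x2..ereal x. g y) + (-1) * k))"
    by (intro L2w_comb x1(2) x2(2) L2p_const AE_p_nn' p_meas)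
  have eq: "(LBINT y=ereal x1..ereal x. f y + c * g y) = (LBINT y=ereal x1..ereal x. f y) + c * ((LBINT y=ereal x2..ereal x. g y) + (-1) * k)"
    if x: "x \<in> I" for x
  proof -
    have "(LBINT y=ereal x1..ereal x. f y + c * g y) = (LBINT y=ereal x1..ereal x. f y) + c * (LBINT y=ereal x1..ereal x. g y)"
      using loc_ii[OF fl x1(1) x] loc_ii[OF gl x1(1) x] by simp
    moreover have "(LBINT y=ereal x2..ereal x1. g y) + (LBINT y=ereal x1..ereal x. g y) = (LBINT y=ereal x2..ereal x. g y)"
    proof (rule interval_integral_sum)
      have "min x2 (min x1 x) \<in> I" "max x2 (max x1 x) \<in> I"
        using x x1(1) x2(1) I_min_max by metis+
      from loc_ii[OF gl this]
      show "interval_lebesgue_integrable lborel (min (ereal x2) (min (ereal x1) (ereal x))) (max (ereal x2) (max (ereal x1) (ereal x))) g"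
        by simp
    qed
    ultimately show ?thesis unfolding k_def by simp
  qed
  have "L2 a b p (\<lambda>x. LBINT y=ereal x1..ereal x. f y + c * g y)"
    by (rule L2w_cong[OF L prim_meas[OF hm]]) (rule eq)
  then show ?thesis unfolding E2_def using L2_comb[OF fL gL] loc_int_comb[OF fl gl] x1(1) by auto
qed

end


lemma sq_to0:
  fixes x e :: "nat \<Rightarrow> real"
  assumes le: "\<And>n. (x n)\<^sup>2 \<le> C * e n" and e: "e \<longlonglongrightarrow> 0" and C: "0 \<le> C"
  shows "x \<longlonglongrightarrow> 0"
proof -
  have "(\<lambda>n. sqrt (C * e n)) \<longlonglongrightarrow> sqrt (C * 0)"
    by (intro tendsto_real_sqrt tendsto_mult tendsto_const e)
  then have s: "(\<lambda>n. sqrt (C * e n)) \<longlonglongrightarrow> 0" by simp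
  have "\<And>n. norm (x n) \<le> sqrt (C * e n)"
    using le by (simp add: real_le_rsqrt)
  then have "eventually (\<lambda>n. norm (x n) \<le> sqrt (C * e n)) sequentially" by simp
  from Lim_null_comparison[OF this s] show ?thesis .
qed

context S begin

lemma ip_scale2: "ip (\<lambda>y. c * u y) (\<lambda>y. c * u y) = c\<^sup>2 * ip u u"
  using ip_scale[of c u "\<lambda>y. c * u y"] ip_scale[of c u u] ip_sym[of u "\<lambda>y. c * u y"]
  by (simp add: power2_eq_square)

lemma ip_tri:
  assumes u: "L2q u" and v: "L2q v"
  shows "ip (\<lambda>y. u y + v y) (\<lambda>y. u y + v y) \<le> 2 * ip u u + 2 * ip v v"
proof -
  have 1: "ip (\<lambda>y. u y + 1 * v y) (\<lambda>y. u y + 1 * v y) = ip u u + 2 * ip u v + ip v v"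
    using ip_expand[OF u v, of 1] by simp
  have 2: "ip (\<lambda>y. u y + (-1) * v y) (\<lambda>y. u y + (-1) * v y) = ip u u - 2 * ip u v + ip v v"
    using ip_expand[OF u v, of "-1"] by simp
  have "0 \<le> ip (\<lambda>y. u y + (-1) * v y) (\<lambda>y. u y + (-1) * v y)" by (rule ip_nn)
  then show ?thesis using 1 2 by simp
qed

lemma SchurI: "L2q f \<Longrightarrow> ip (T f) (T f) \<le> \<kappa>\<^sup>2 * ip f f"
  using Schur(2) nsq_ip by metis

lemma E2_zero: "(\<lambda>_. 0) \<in> E2 a b p w"
  using E2_comb[OF e1E e1E, of "-1"] by simp

lemma E2_scale: "f \<in> E2 a b p w \<Longrightarrow> (\<lambda>y. c * f y) \<in> E2 a b p w"
  using E2_comb[OF E2_zero, of f c] by simp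

lemma T_scale: "L2q f \<Longrightarrow> T (\<lambda>y. c * f y) x = c * T f x"
  using T_lin[OF L2_zero, of f c x] T_zero[of "\<lambda>_. 0" x] by simp

lemma T_zero_fun: "T (\<lambda>_. 0) x = 0"
  using T_zero[of "\<lambda>_. 0" x] by simp


lemma lim_sandwich0:
  fixes x bb :: "nat \<Rightarrow> real"
  assumes "\<And>n. 0 \<le> x n" "\<And>n. x n \<le> bb n" "bb \<longlonglongrightarrow> 0"
  shows "x \<longlonglongrightarrow> 0"
  by (rule tendsto_sandwich[of "\<lambda>_. 0" x sequentially bb 0]) (use assms in auto)

lemma const_le_lim0:
  fixes bb :: "nat \<Rightarrow> real"
  assumes "\<And>n. c \<le> bb n" "bb \<longlonglongrightarrow> 0"
  shows "c \<le> 0"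
  using tendsto_le[OF trivial_limit_sequentially assms(2) tendsto_const] assms(1) by auto

lemma no_top_seq:
  assumes GE: "\<And>n. G n \<in> E2 a b p w" and Go: "\<And>n. ip (G n) e1 = 0" and G1: "\<And>n. ip (G n) (G n) \<le> 1"
    and alim: "(\<lambda>n. ip (T (G n)) (T (G n))) \<longlonglongrightarrow> \<kappa>\<^sup>2"
    and gE: "g \<in> E2 a b p w"
    and conv: "(\<lambda>n. ip (\<lambda>y. T (G n) y + (-1) * g y) (\<lambda>y. T (G n) y + (-1) * g y)) \<longlonglongrightarrow> 0"
  shows False
proof -
  define k2 where "k2 = \<kappa>\<^sup>2"
  have k2: "k2 > 0" unfolding k2_def using kappa_pos by simp
  define N where "N u = ip u u" for u
  have Nnn: "0 \<le> N u" for u unfolding N_def by (rule ip_nn)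
  have GL: "L2q (G n)" for n using E2_L2[OF GE] .
  have TGL: "L2q (T (G n))" for n using Schur(1)[OF GL] .
  have TTGL: "L2q (T (T (G n)))" for n using Schur(1)[OF TGL] .
  have gL: "L2q g" using E2_L2[OF gE] .
  have TgL: "L2q (T g)" using Schur(1)[OF gL] .
  define a where "a n = N (T (G n))" for n
  have alim': "a \<longlonglongrightarrow> k2" using alim unfolding a_def N_def k2_def .
  have aG: "a n \<le> k2 * N (G n)" for n unfolding a_def N_def k2_def by (rule SchurI[OF GL])
  have NG1: "(\<lambda>n. N (G n)) \<longlonglongrightarrow> 1"
  proof (rule tendsto_sandwich[of "\<lambda>n. a n / k2" _ _ "\<lambda>_. 1"])
    show "\<forall>\<^sub>F n in sequentially. a n / k2 \<le> N (G n)" using aG k2 by (simp add: pos_divide_le_eq mult.commute)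
    show "\<forall>\<^sub>F n in sequentially. N (G n) \<le> 1" using G1 unfolding N_def by simp
    show "(\<lambda>n. a n / k2) \<longlonglongrightarrow> 1" using tendsto_divide[OF alim' tendsto_const[of k2]] k2 by simp
  qed simp
  define D where "D n = (\<lambda>y. T (T (G n)) y + (- k2) * G n y)" for n
  have DL: "L2q (D n)" for n unfolding D_def by (rule L2_comb[OF TTGL GL])
  have ND: "N (D n) \<le> k2\<^sup>2 - k2 * a n" for n
  proof -
    have e: "N (D n) = N (T (T (G n))) + 2 * (- k2) * ip (T (T (G n))) (G n) + (- k2)\<^sup>2 * N (G n)"
      unfolding N_def D_def by (rule ip_expand[OF TTGL GL])
    have "ip (T (T (G n))) (G n) = a n" unfolding a_def N_def by (rule adj[OF TGL GL])
    moreover have "N (T (T (G n))) \<le> k2 * a n" unfolding a_def N_def k2_def by (rule SchurI[OF TGL])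
    moreover have "k2\<^sup>2 * N (G n) \<le> k2\<^sup>2 * 1" using G1[of n] unfolding N_def by (intro mult_left_mono) auto
    ultimately show ?thesis unfolding e by (simp add: power2_eq_square)
  qed
  have NDlim: "(\<lambda>n. N (D n)) \<longlonglongrightarrow> 0"
  proof (rule lim_sandwich0[OF Nnn ND])
    show "(\<lambda>n. k2\<^sup>2 - k2 * a n) \<longlonglongrightarrow> 0"
      using tendsto_diff[OF tendsto_const[of "k2\<^sup>2"] tendsto_mult[OF tendsto_const[of k2] alim']]
      by (simp add: power2_eq_square)
  qed
  define W where "W n = T (\<lambda>z. T (G n) z + (-1) * g z)" for n
  have WL: "L2q (W n)" for n unfolding W_def by (rule Schur(1)[OF L2_comb[OF TGL gL]])
  have NW: "N (W n) \<le> k2 * N (\<lambda>z. T (G n) z + (-1) * g z)" for n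
    unfolding W_def N_def k2_def by (rule SchurI[OF L2_comb[OF TGL gL]])
  have NWlim: "(\<lambda>n. N (W n)) \<longlonglongrightarrow> 0"
    using lim_sandwich0[OF Nnn NW] tendsto_mult[OF tendsto_const[of k2] conv[folded N_def]] by simp
  define \<phi> where "\<phi> = (\<lambda>y. (1 / k2) * T g y)"
  have \<phi>L: "L2q \<phi>" unfolding \<phi>_def by (rule L2_scale[OF TgL])
  define E where "E n = (\<lambda>y. G n y + (-1) * \<phi> y)" for n
  have EL: "L2q (E n)" for n unfolding E_def by (rule L2_comb[OF GL \<phi>L])
  have Eid: "(\<lambda>y. k2 * E n y) = (\<lambda>y. W n y + (-1) * D n y)" for n
  proof
    fix y
    have "W n y = T (T (G n)) y + (-1) * T g y" unfolding W_def by (rule T_lin[OF TGL gL])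
    then show "k2 * E n y = W n y + (-1) * D n y"
      unfolding E_def D_def \<phi>_def using k2 by (simp add: algebra_simps)
  qed
  have NE: "N (E n) \<le> (2 * N (W n) + 2 * N (D n)) / k2\<^sup>2" for n
  proof -
    have "k2\<^sup>2 * N (E n) = N (\<lambda>y. k2 * E n y)" unfolding N_def by (simp add: ip_scale2)
    also have "\<dots> = N (\<lambda>y. W n y + (-1) * D n y)" unfolding Eid ..
    also have "\<dots> \<le> 2 * N (W n) + 2 * N (\<lambda>y. (-1) * D n y)"
      unfolding N_def by (rule ip_tri[OF WL L2_scale[OF DL]])
    also have "N (\<lambda>y. (-1) * D n y) = N (D n)" unfolding N_def using ip_scale2[where c="-1" and u="D n"] by simp
    finally show ?thesis using k2 by (simp add: pos_le_divide_eq mult.commute)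
  qed
  have NElim: "(\<lambda>n. N (E n)) \<longlonglongrightarrow> 0"
  proof (rule lim_sandwich0[OF Nnn NE])
    show "(\<lambda>n. (2 * N (W n) + 2 * N (D n)) / k2\<^sup>2) \<longlonglongrightarrow> 0"
      using tendsto_divide[OF tendsto_add[OF tendsto_mult[OF tendsto_const NWlim] tendsto_mult[OF tendsto_const NDlim]] tendsto_const[of "k2\<^sup>2"]] k2
      by simp
  qed
  have \<phi>o: "ip \<phi> e1 = 0"
  proof -
    have eq: "ip (E n) e1 = - ip \<phi> e1" for n
      unfolding E_def using ip_comb[OF GL[of n] \<phi>L e1L2, of "-1"] Go[of n] by simp
    have "(\<lambda>n. ip (E n) e1) \<longlonglongrightarrow> 0"
    proof (rule sq_to0)
      show "(ip (E n) e1)\<^sup>2 \<le> 1 * N (E n)" for n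
        using CS[OF EL e1L2] e1n nsq_ip[of e1] unfolding N_def by (simp add: mult.commute)
    qed (use NElim in auto)
    then have "(\<lambda>n. - ip \<phi> e1) \<longlonglongrightarrow> 0" unfolding eq .
    then show ?thesis by (simp add: LIMSEQ_const_iff)
  qed
  have N\<phi>: "N \<phi> = 1"
  proof -
    define S where "S n = (\<lambda>y. G n y + 1 * \<phi> y)" for n
    have SL: "L2q (S n)" for n unfolding S_def by (rule L2_comb[OF GL \<phi>L])
    have eq: "ip (E n) (S n) = N (G n) - N \<phi>" for n
    proof -
      have "ip (E n) (S n) = ip (G n) (S n) + (-1) * ip \<phi> (S n)" unfolding E_def by (rule ip_comb[OF GL \<phi>L SL])
      also have "ip (G n) (S n) = N (G n) + ip (G n) \<phi>"
      proof -
        have c1: "ip (S n) (G n) = ip (G n) (G n) + 1 * ip \<phi> (G n)" unfolding S_def by (rule ip_comb[OF GL \<phi>L GL])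
        then show ?thesis using ip_sym[of "G n" "S n"] ip_sym[of \<phi> "G n"] unfolding N_def by simp
      qed
      also have "ip \<phi> (S n) = ip \<phi> (G n) + N \<phi>"
      proof -
        have c1: "ip (S n) \<phi> = ip (G n) \<phi> + 1 * ip \<phi> \<phi>" unfolding S_def by (rule ip_comb[OF GL \<phi>L \<phi>L])
        then show ?thesis using ip_sym[of \<phi> "S n"] ip_sym[of \<phi> "G n"] unfolding N_def by simp
      qed
      finally show ?thesis using ip_sym[of "G n" \<phi>] by simp
    qed
    have NS: "N (S n) \<le> 2 + 2 * N \<phi>" for n
    proof -
      have "N (S n) \<le> 2 * N (G n) + 2 * N \<phi>"
        unfolding S_def N_def using ip_tri[OF GL \<phi>L] by simp
      then show ?thesis using G1[of n] unfolding N_def by simp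
    qed
    have "(\<lambda>n. ip (E n) (S n)) \<longlonglongrightarrow> 0"
    proof (rule sq_to0)
      show "(ip (E n) (S n))\<^sup>2 \<le> (2 + 2 * N \<phi>) * N (E n)" for n
      proof -
        have "(ip (E n) (S n))\<^sup>2 \<le> N (E n) * N (S n)" unfolding N_def by (rule CS[OF EL SL])
        also have "\<dots> \<le> N (E n) * (2 + 2 * N \<phi>)" using NS[of n] Nnn[of "E n"] by (intro mult_left_mono) auto
        finally show ?thesis by (simp add: mult.commute)
      qed
      show "0 \<le> 2 + 2 * N \<phi>" using Nnn[of \<phi>] by simp
    qed (use NElim in auto)
    then have "(\<lambda>n. N (G n) - N \<phi>) \<longlonglongrightarrow> 0" unfolding eq .
    then have "(\<lambda>n. N (G n) - N \<phi> + N \<phi>) \<longlonglongrightarrow> 0 + N \<phi>" by (intro tendsto_add tendsto_const)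
    then have "(\<lambda>n. N (G n)) \<longlonglongrightarrow> N \<phi>" by simp
    from LIMSEQ_unique[OF this NG1] show ?thesis .
  qed
  have T\<phi>L: "L2q (T \<phi>)" using Schur(1)[OF \<phi>L] .
  have TT\<phi>L: "L2q (T (T \<phi>))" using Schur(1)[OF T\<phi>L] .
  define Z where "Z = (\<lambda>y. T (T \<phi>) y + (- k2) * \<phi> y)"
  have ZL: "L2q Z" unfolding Z_def by (rule L2_comb[OF TT\<phi>L \<phi>L])
  define U where "U n = T (T (E n))" for n
  have TEL: "L2q (T (E n))" for n using Schur(1)[OF EL] .
  have UL: "L2q (U n)" for n unfolding U_def using Schur(1)[OF TEL] .
  have NU: "N (U n) \<le> k2\<^sup>2 * N (E n)" for n
  proof -
    have "N (U n) \<le> k2 * N (T (E n))" unfolding U_def N_def k2_def by (rule SchurI[OF TEL])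
    also have "\<dots> \<le> k2 * (k2 * N (E n))" using SchurI[OF EL] k2 unfolding N_def k2_def
      by (intro mult_left_mono) auto
    finally show ?thesis by (simp add: power2_eq_square)
  qed
  have Zid: "Z = (\<lambda>y. (-1) * U n y + (D n y + k2 * E n y))" for n
  proof
    fix y
    have TE: "T (E n) z = T (G n) z + (-1) * T \<phi> z" for z unfolding E_def by (rule T_lin[OF GL \<phi>L])
    have "U n y = T (\<lambda>z. T (G n) z + (-1) * T \<phi> z) y" unfolding U_def TE[abs_def] ..
    also have "\<dots> = T (T (G n)) y + (-1) * T (T \<phi>) y" by (rule T_lin[OF TGL T\<phi>L])
    finally show "Z y = (-1) * U n y + (D n y + k2 * E n y)"
      unfolding Z_def D_def E_def by (simp add: algebra_simps)
  qed
  have NZ: "N Z \<le> 2 * N (U n) + 4 * N (D n) + 4 * (k2\<^sup>2 * N (E n))" for n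
  proof -
    have DEL: "L2q (\<lambda>y. D n y + k2 * E n y)" by (rule L2_comb[OF DL EL])
    have "N Z \<le> 2 * N (\<lambda>y. (-1) * U n y) + 2 * N (\<lambda>y. D n y + k2 * E n y)"
      unfolding Zid[of n] N_def by (rule ip_tri[OF L2_scale[OF UL] DEL])
    also have "N (\<lambda>y. (-1) * U n y) = N (U n)" unfolding N_def using ip_scale2[where c="-1" and u="U n"] by simp
    also have "N (\<lambda>y. D n y + k2 * E n y) \<le> 2 * N (D n) + 2 * N (\<lambda>y. k2 * E n y)"
      unfolding N_def by (rule ip_tri[OF DL L2_scale[OF EL]])
    also have "N (\<lambda>y. k2 * E n y) = k2\<^sup>2 * N (E n)" unfolding N_def by (simp add: ip_scale2)
    finally show ?thesis by simp
  qed
  have "N Z \<le> 0"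
  proof (rule const_le_lim0[OF order.trans[OF NZ]])
    show "2 * N (U n) + 4 * N (D n) + 4 * (k2\<^sup>2 * N (E n)) \<le> 2 * (k2\<^sup>2 * N (E n)) + 4 * N (D n) + 4 * (k2\<^sup>2 * N (E n))" for n
      using NU[of n] by linarith
    show "(\<lambda>n. 2 * (k2\<^sup>2 * N (E n)) + 4 * N (D n) + 4 * (k2\<^sup>2 * N (E n))) \<longlonglongrightarrow> 0"
    proof -
      have "(\<lambda>n. 2 * (k2\<^sup>2 * N (E n)) + 4 * N (D n) + 4 * (k2\<^sup>2 * N (E n))) \<longlonglongrightarrow> 2 * (k2\<^sup>2 * 0) + 4 * 0 + 4 * (k2\<^sup>2 * 0)"
        by (intro tendsto_intros NElim NDlim)
      then show ?thesis by simp
    qed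
  qed
  then have "N Z = 0" using Nnn[of Z] by simp
  then have Z0: "AE y in lborel. y \<in> I \<longrightarrow> Z y = 0" using nsq_zero[OF ZL] unfolding N_def by simp
  have \<phi>m[measurable]: "\<phi> \<in> borel_measurable borel" using L2q_meas[OF \<phi>L] .
  have T\<phi>m[measurable]: "T \<phi> \<in> borel_measurable borel" using L2q_meas[OF T\<phi>L] .
  define \<psi> where "\<psi> = (\<lambda>y. T \<phi> y + (- \<kappa>) * \<phi> y)"
  have \<psi>L: "L2q \<psi>" unfolding \<psi>_def by (rule L2_comb[OF T\<phi>L \<phi>L])
  show False
  proof (cases "N \<psi> = 0")
    case True
    then have "AE y in lborel. y \<in> I \<longrightarrow> \<psi> y = 0" using nsq_zero[OF \<psi>L] unfolding N_def by simp
    then have ev: "AE y in lborel. y \<in> I \<longrightarrow> T \<phi> y = \<kappa> * \<phi> y" by eventually_elim (auto simp: \<psi>_def)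
    have "AE y in lborel. y \<in> I \<longrightarrow> \<phi> y = 0" by (rule perron[OF \<phi>L \<phi>o ev]) (use kappa_pos in simp)
    then have "N \<phi> = 0" unfolding N_def by (rule ip_zero) auto
    then show False using N\<phi> by simp
  next
    case False
    have T\<psi>: "T \<psi> y = T (T \<phi>) y + (- \<kappa>) * T \<phi> y" for y unfolding \<psi>_def by (rule T_lin[OF T\<phi>L \<phi>L])
    have ev: "AE y in lborel. y \<in> I \<longrightarrow> T \<psi> y = (- \<kappa>) * \<psi> y"
      using Z0
    proof eventually_elim
      case (elim y)
      show ?case
      proof
        assume "y \<in> I"
        then have "T (T \<phi>) y = \<kappa>\<^sup>2 * \<phi> y" using elim unfolding Z_def k2_def by simp
        then show "T \<psi> y = (- \<kappa>) * \<psi> y" unfolding T\<psi> unfolding \<psi>_def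
          by (simp add: algebra_simps power2_eq_square)
      qed
    qed
    have "ip \<psi> e1 = ip (T \<phi>) e1 + (- \<kappa>) * ip \<phi> e1" unfolding \<psi>_def by (rule ip_comb[OF T\<phi>L \<phi>L e1L2])
    also have "ip (T \<phi>) e1 = ip \<phi> (T e1)" by (rule adj[OF \<phi>L e1L2])
    also have "\<dots> = ip (T e1) \<phi>" by (rule ip_sym)
    also have "\<dots> = ip (\<lambda>y. \<kappa> * e1 y) \<phi>"
    proof (rule ip_cong)
      show "AE y in lborel. y \<in> I \<longrightarrow> T e1 y = \<kappa> * e1 y" using AE_pos by eventually_elim auto
      show "T e1 \<in> borel_measurable borel" by (rule T_meas[OF e1L2])
    qed measurable
    also have "\<dots> = \<kappa> * ip \<phi> e1" by (simp add: ip_scale ip_sym)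
    finally have \<psi>o: "ip \<psi> e1 = 0" using \<phi>o by simp
    have "AE y in lborel. y \<in> I \<longrightarrow> \<psi> y = 0" by (rule perron[OF \<psi>L \<psi>o ev]) (use kappa_pos in simp)
    then have "N \<psi> = 0" unfolding N_def by (rule ip_zero) (use L2q_meas[OF \<psi>L] in auto)
    then show False using False by simp
  qed
qed

end

context S begin

lemma gap: "\<exists>M. 0 \<le> M \<and> M < \<kappa>\<^sup>2 \<and> (\<forall>r. r \<in> E2 a b p w \<longrightarrow> ip r e1 = 0 \<longrightarrow> ip (T r) (T r) \<le> M * ip r r)"
proof -
  define V where "V = {f. f \<in> E2 a b p w \<and> ip f e1 = 0 \<and> ip f f \<le> 1}"
  define SS where "SS = (\<lambda>f. ip (T f) (T f)) ` V"
  define M where "M = Sup SS"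
  have z: "(\<lambda>_. 0) \<in> V" unfolding V_def using E2_zero by (simp add: ip_def)
  have ne: "SS \<noteq> {}" unfolding SS_def using z by auto
  have ub: "s \<le> \<kappa>\<^sup>2" if "s \<in> SS" for s
  proof -
    from that have "s \<in> (\<lambda>f. ip (T f) (T f)) ` V" unfolding SS_def .
    then obtain f where f: "f \<in> V" "s = ip (T f) (T f)" by blast
    have "s \<le> \<kappa>\<^sup>2 * ip f f" using SchurI[OF E2_L2] f unfolding V_def by auto
    also have "\<dots> \<le> \<kappa>\<^sup>2 * 1" using f(1) unfolding V_def by (intro mult_left_mono) auto
    finally show ?thesis by simp
  qed
  have bdd: "bdd_above SS" by (rule bdd_aboveI[where M="\<kappa>\<^sup>2"]) (rule ub)
  have M0: "0 \<le> M"
  proof -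
    have "ip (T (\<lambda>_. 0)) (T (\<lambda>_. 0)) \<in> SS" unfolding SS_def using z by auto
    moreover have "ip (T (\<lambda>_. 0)) (T (\<lambda>_. 0)) = 0" by (simp add: T_zero_fun ip_def)
    ultimately show ?thesis unfolding M_def using cSup_upper[OF _ bdd] by metis
  qed
  have Mk: "M \<le> \<kappa>\<^sup>2" unfolding M_def using cSup_least[OF ne] ub by auto
  have bound: "ip (T r) (T r) \<le> M * ip r r" if rE: "r \<in> E2 a b p w" and ro: "ip r e1 = 0" for r
  proof (cases "ip r r = 0")
    case True
    have rL: "L2q r" using E2_L2[OF rE] .
    have "AE y in lborel. y \<in> I \<longrightarrow> r y = 0" using nsq_zero[OF rL True] .
    then have "T r = (\<lambda>_. 0)" using T_zero L2q_meas[OF rL] by auto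
    then show ?thesis using True by (simp add: ip_def)
  next
    case False
    have rL: "L2q r" using E2_L2[OF rE] .
    have pos: "ip r r > 0" using False ip_nn[of r] by simp
    define c where "c = 1 / sqrt (ip r r)"
    have c2: "c\<^sup>2 = 1 / ip r r" unfolding c_def using pos by (simp add: power_divide)
    define f where "f = (\<lambda>y. c * r y)"
    have "ip f f = c\<^sup>2 * ip r r" unfolding f_def by (rule ip_scale2)
    then have ff: "ip f f = 1" using pos by (simp add: c2)
    have fo: "ip f e1 = 0" unfolding f_def using ro by (simp add: ip_scale)
    have fV: "f \<in> V" unfolding V_def using E2_scale[OF rE] ff fo by (simp add: f_def)
    have "ip (T f) (T f) \<le> M" unfolding M_def SS_def using fV by (intro cSup_upper bdd[unfolded SS_def]) auto
    moreover have "T f = (\<lambda>y. c * T r y)" unfolding f_def using T_scale[OF rL] by auto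
    ultimately have "c\<^sup>2 * ip (T r) (T r) \<le> M" by (simp add: ip_scale2)
    then show ?thesis using pos by (simp add: c2 field_simps)
  qed
  have Mlt: "M < \<kappa>\<^sup>2"
  proof (rule ccontr)
    assume "\<not> M < \<kappa>\<^sup>2"
    then have Meq: "M = \<kappa>\<^sup>2" using Mk by simp
    have ex1: "\<exists>f. f \<in> V \<and> \<kappa>\<^sup>2 - 1 / (real n + 1) < ip (T f) (T f)" for n
    proof -
      have "\<kappa>\<^sup>2 - 1 / (real n + 1) < Sup SS" using Meq unfolding M_def by simp
      then obtain s where "s \<in> SS" "\<kappa>\<^sup>2 - 1 / (real n + 1) < s" using less_cSup_iff[OF ne bdd] by auto
      then show ?thesis unfolding SS_def by auto
    qed
    have ex: "\<forall>n. \<exists>f. f \<in> V \<and> \<kappa>\<^sup>2 - 1 / (real n + 1) < ip (T f) (T f)" using ex1 by simp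
    obtain F where F': "\<forall>n. F n \<in> V \<and> \<kappa>\<^sup>2 - 1 / (real n + 1) < ip (T (F n)) (T (F n))"
      using choice[OF ex] by (elim exE) simp
    have F: "\<And>n. F n \<in> V" "\<And>n. \<kappa>\<^sup>2 - 1 / (real n + 1) < ip (T (F n)) (T (F n))" using F' by simp_all
    have FE: "\<forall>n. F n \<in> E2 a b p w" using F(1) unfolding V_def by auto
    have FB: "\<exists>B. \<forall>n. nsq (F n) \<le> B" using F(1) unfolding V_def nsq_ip by auto
    obtain rr g where rr: "strict_mono rr" and gE: "g \<in> E2 a b p w"
      and conv: "(\<lambda>n. nsq (\<lambda>y. T (F (rr n)) y - g y)) \<longlonglongrightarrow> 0"
    proof -
      have "\<exists>(r :: nat \<Rightarrow> nat) g. strict_mono r \<and> g \<in> E2 a b p w \<and>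
           (\<lambda>n. normsq a b p w (\<lambda>y. Lt a b p w (F (r n)) y - g y)) \<longlonglongrightarrow> 0"
        using conjunct2[OF cpt[unfolded Lt_compact_def], rule_format, OF conjI[OF FE FB]] .
      then show ?thesis using that by (elim exE conjE) simp
    qed
    define G where "G n = F (rr n)" for n
    have GV: "G n \<in> V" for n unfolding G_def using F(1) .
    have lo: "\<kappa>\<^sup>2 - 1 / (real (rr n) + 1) < ip (T (G n)) (T (G n))" for n unfolding G_def using F(2) .
    have hi: "ip (T (G n)) (T (G n)) \<le> \<kappa>\<^sup>2" for n using ub GV unfolding SS_def by auto
    have l1: "(\<lambda>n. 1 / (real (rr n) + 1)) \<longlonglongrightarrow> 0"
      using LIMSEQ_subseq_LIMSEQ[OF LIMSEQ_inverse_real_of_nat rr] by (simp add: comp_def inverse_eq_divide add.commute)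
    have alim: "(\<lambda>n. ip (T (G n)) (T (G n))) \<longlonglongrightarrow> \<kappa>\<^sup>2"
    proof (rule tendsto_sandwich[of "\<lambda>n. \<kappa>\<^sup>2 - 1 / (real (rr n) + 1)" _ _ "\<lambda>_. \<kappa>\<^sup>2"])
      show "\<forall>\<^sub>F n in sequentially. \<kappa>\<^sup>2 - 1 / (real (rr n) + 1) \<le> ip (T (G n)) (T (G n))"
        using lo by (simp add: less_imp_le)
      show "\<forall>\<^sub>F n in sequentially. ip (T (G n)) (T (G n)) \<le> \<kappa>\<^sup>2" using hi by simp
      show "(\<lambda>n. \<kappa>\<^sup>2 - 1 / (real (rr n) + 1)) \<longlonglongrightarrow> \<kappa>\<^sup>2"
        using tendsto_diff[OF tendsto_const[of "\<kappa>\<^sup>2"] l1] by simp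
    qed simp
    have conv': "(\<lambda>n. ip (\<lambda>y. T (G n) y + (-1) * g y) (\<lambda>y. T (G n) y + (-1) * g y)) \<longlonglongrightarrow> 0"
      using conv unfolding G_def nsq_ip by simp
    show False
      by (rule no_top_seq[OF _ _ _ alim gE conv']) (use GV in \<open>auto simp: V_def\<close>)
  qed
  show ?thesis using M0 Mlt bound by blast
qed


lemma ip_T_e1:
  assumes f: "L2q f"
  shows "ip (T f) e1 = \<kappa> * ip f e1"
proof -
  have fm[measurable]: "f \<in> borel_measurable borel" using L2q_meas[OF f] .
  have "ip (T f) e1 = ip f (T e1)" by (rule adj[OF f e1L2])
  also have "\<dots> = ip (T e1) f" by (rule ip_sym)
  also have "\<dots> = ip (\<lambda>y. \<kappa> * e1 y) f"
  proof (rule ip_cong)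
    show "AE y in lborel. y \<in> I \<longrightarrow> T e1 y = \<kappa> * e1 y" using AE_pos by eventually_elim auto
    show "T e1 \<in> borel_measurable borel" by (rule T_meas[OF e1L2])
  qed measurable
  also have "\<dots> = \<kappa> * ip f e1" by (simp add: ip_scale ip_sym)
  finally show ?thesis .
qed

lemma A_pos: "ip h0 e1 > 0"
proof -
  have q0: "q x0 > 0" using px0 wx0 by simp
  have "AE z in lborel. z \<in> I \<longrightarrow> K x0 z * e1 z > 0"
    using AE_pos by eventually_elim (use x0I K_pos in auto)
  from integral_pos_AE[OF I_meas I_pos Kf_int[OF e1L2] this]
  have "0 < integral\<^sup>L lborel (\<lambda>z. indicator I z * (K x0 z * e1 z))" .
  then have "T e1 x0 > 0" unfolding T_def' using q0 by simp
  then show ?thesis using T_x0[OF e1L2] by simp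
qed

lemma main:
  assumes g0E: "g0 \<in> E2 a b p w" and c0: "ip g0 e1 \<noteq> 0"
  shows "(\<lambda>n. (T ^^ Suc n) g0 x0 / (T ^^ n) g0 x0) \<longlonglongrightarrow> \<kappa>"
proof -
  obtain M where M0: "0 \<le> M" and Mk: "M < \<kappa>\<^sup>2"
    and bound: "\<And>r. r \<in> E2 a b p w \<Longrightarrow> ip r e1 = 0 \<Longrightarrow> ip (T r) (T r) \<le> M * ip r r"
    using gap by blast
  define c where "c = ip g0 e1"
  define Gn where "Gn n = (T ^^ n) g0" for n
  have GnS: "Gn (Suc n) = T (Gn n)" for n unfolding Gn_def by simp
  have GnE: "Gn n \<in> E2 a b p w" for n
  proof (induction n)
    case 0 then show ?case using g0E unfolding Gn_def by simp
  next
    case (Suc n) then show ?case unfolding GnS using cpt unfolding Lt_compact_def by blast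
  qed
  have GnL: "L2q (Gn n)" for n using E2_L2[OF GnE] .
  have ipG: "ip (Gn n) e1 = \<kappa> ^ n * c" for n
  proof (induction n)
    case 0 then show ?case unfolding Gn_def c_def by simp
  next
    case (Suc n) then show ?case unfolding GnS using ip_T_e1[OF GnL[of n]] by simp
  qed
  have e11: "ip e1 e1 = 1" using e1n nsq_ip by simp
  define r where "r n = (\<lambda>y. Gn n y + (- (c * \<kappa> ^ n)) * e1 y)" for n
  have rE: "r n \<in> E2 a b p w" for n unfolding r_def by (rule E2_comb[OF GnE e1E])
  have rL: "L2q (r n)" for n using E2_L2[OF rE] .
  have rm[measurable]: "r n \<in> borel_measurable borel" for n using L2q_meas[OF rL] .
  have ro: "ip (r n) e1 = 0" for n
    unfolding r_def using ip_comb[OF GnL[of n] e1L2 e1L2, of "- (c * \<kappa> ^ n)"] ipG[of n] e11 by simp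
  have rstep: "AE y in lborel. y \<in> I \<longrightarrow> r (Suc n) y = T (r n) y" for n
    using AE_pos
  proof eventually_elim
    case (elim y)
    show ?case
    proof
      assume "y \<in> I"
      then have "T e1 y = \<kappa> * e1 y" using elim by simp
      moreover have "T (r n) y = T (Gn n) y + (- (c * \<kappa> ^ n)) * T e1 y" unfolding r_def by (rule T_lin[OF GnL e1L2])
      ultimately show "r (Suc n) y = T (r n) y" unfolding r_def GnS by (simp add: algebra_simps)
    qed
  qed
  have Trm[measurable]: "T (r n) \<in> borel_measurable borel" for n by (rule T_meas[OF rL])
  have Nr: "ip (r (Suc n)) (r (Suc n)) = ip (T (r n)) (T (r n))" for n
  proof -
    have "ip (r (Suc n)) (r (Suc n)) = ip (T (r n)) (r (Suc n))" by (rule ip_cong[OF rstep]) auto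
    also have "\<dots> = ip (r (Suc n)) (T (r n))" by (rule ip_sym)
    also have "\<dots> = ip (T (r n)) (T (r n))" by (rule ip_cong[OF rstep]) auto
    finally show ?thesis .
  qed
  have Nrb: "ip (r n) (r n) \<le> M ^ n * ip (r 0) (r 0)" for n
  proof (induction n)
    case 0 then show ?case by simp
  next
    case (Suc n)
    have "ip (r (Suc n)) (r (Suc n)) \<le> M * ip (r n) (r n)" unfolding Nr by (rule bound[OF rE ro])
    also have "\<dots> \<le> M * (M ^ n * ip (r 0) (r 0))" using Suc M0 by (intro mult_left_mono) auto
    finally show ?case by simp
  qed
  define A where "A = ip e1 h0"
  have A: "A > 0" unfolding A_def using A_pos ip_sym by metis
  define \<epsilon> where "\<epsilon> n = ip (r n) h0" for n
  have val: "(T ^^ Suc n) g0 x0 = \<epsilon> n + c * \<kappa> ^ n * A" for n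
  proof -
    have "(T ^^ Suc n) g0 x0 = T (Gn n) x0" unfolding Gn_def by simp
    also have "\<dots> = ip h0 (Gn n)" by (rule T_x0[OF GnL])
    also have "\<dots> = ip (Gn n) h0" by (rule ip_sym)
    also have "Gn n = (\<lambda>y. r n y + (c * \<kappa> ^ n) * e1 y)" unfolding r_def by auto
    also have "ip (\<lambda>y. r n y + (c * \<kappa> ^ n) * e1 y) h0 = ip (r n) h0 + (c * \<kappa> ^ n) * ip e1 h0"
      by (rule ip_comb[OF rL e1L2 kwL2])
    finally show ?thesis unfolding \<epsilon>_def A_def by simp
  qed
  have kp: "\<kappa> > 0" by (rule kappa_pos)
  define u where "u n = \<epsilon> n / \<kappa> ^ n" for n
  have ulim: "u \<longlonglongrightarrow> 0"
  proof (rule sq_to0)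
    show "(u n)\<^sup>2 \<le> (ip (r 0) (r 0) * ip h0 h0) * (M / \<kappa>\<^sup>2) ^ n" for n
    proof -
      have "(\<epsilon> n)\<^sup>2 \<le> ip (r n) (r n) * ip h0 h0" unfolding \<epsilon>_def by (rule CS[OF rL kwL2])
      also have "\<dots> \<le> (M ^ n * ip (r 0) (r 0)) * ip h0 h0" using Nrb[of n] ip_nn[of h0] by (intro mult_right_mono) auto
      finally have e: "(\<epsilon> n)\<^sup>2 \<le> M ^ n * (ip (r 0) (r 0) * ip h0 h0)" by simp
      have "(u n)\<^sup>2 = (\<epsilon> n)\<^sup>2 / (\<kappa>\<^sup>2) ^ n" unfolding u_def by (simp add: power_divide power_mult[symmetric] mult.commute)
      also have "\<dots> \<le> M ^ n * (ip (r 0) (r 0) * ip h0 h0) / (\<kappa>\<^sup>2) ^ n" using e kp by (intro divide_right_mono) auto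
      also have "\<dots> = (ip (r 0) (r 0) * ip h0 h0) * (M / \<kappa>\<^sup>2) ^ n" by (simp add: power_divide)
      finally show ?thesis .
    qed
    show "(\<lambda>n. (M / \<kappa>\<^sup>2) ^ n) \<longlonglongrightarrow> 0" using M0 Mk kp by (intro LIMSEQ_power_zero) simp
    show "0 \<le> ip (r 0) (r 0) * ip h0 h0" using ip_nn[of "r 0"] ip_nn[of h0] by simp
  qed
  have cA: "c * A \<noteq> 0" using c0 A unfolding c_def by simp
  have lim2: "(\<lambda>m. (\<kappa> * u (Suc m) + c * \<kappa> * A) / (u m + c * A)) \<longlonglongrightarrow> (\<kappa> * 0 + c * \<kappa> * A) / (0 + c * A)"
    by (intro tendsto_intros ulim LIMSEQ_Suc) (use cA in simp)
  have eq2: "(T ^^ Suc (Suc m)) g0 x0 / (T ^^ Suc m) g0 x0 = (\<kappa> * u (Suc m) + c * \<kappa> * A) / (u m + c * A)" for m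
  proof -
    have km: "\<kappa> ^ m > 0" using kp by simp
    have "(T ^^ Suc (Suc m)) g0 x0 = \<kappa> ^ m * (\<kappa> * u (Suc m) + c * \<kappa> * A)"
      unfolding val u_def using km kp by (simp add: field_simps)
    moreover have "(T ^^ Suc m) g0 x0 = \<kappa> ^ m * (u m + c * A)"
      unfolding val u_def using km kp by (simp add: field_simps)
    ultimately show ?thesis using km by simp
  qed
  have "(\<lambda>m. (T ^^ Suc (Suc m)) g0 x0 / (T ^^ Suc m) g0 x0) \<longlonglongrightarrow> \<kappa>"
    using lim2 cA unfolding eq2 by simp
  then show ?thesis by (rule LIMSEQ_imp_Suc)
qed

end

theorem theorem3p8:
  fixes a b :: ereal and p w e1 g0 :: "real \<Rightarrow> real" and x :: real
  assumes "a < b"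
    and "prob_density a b p"
    and "weight a b p w"
    and "H1 a b p w" and "H2 a b p w"
    and "Lt_compact a b p w"
    and "x \<in> Ioi a b"
    and "p x > 0" and "w x > 0"
    and "L2 a b (\<lambda>y. p y * w y) (kw a b p w x)"
    and "e1 \<in> E2 a b p w"
    and "AE y in lborel. y \<in> Ioi a b \<longrightarrow> Lt a b p w e1 y = Cpw a b p w * e1 y"
    and "AE y in lborel. y \<in> Ioi a b \<longrightarrow> e1 y > 0"
    and "normsq a b p w e1 = 1"
    and "g0 \<in> E2 a b p w"
    and "(LINT y:Ioi a b|lborel. g0 y * e1 y * w y * p y) \<noteq> 0"
  shows "(\<lambda>n. (Lt a b p w ^^ Suc n) g0 x / (Lt a b p w ^^ n) g0 x) \<longlonglongrightarrow> Cpw a b p w"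
proof -
  interpret S a b p w e1 x "Cpw a b p w"
    by (rule S.intro[OF assms(1,2,3,6,7,8,9,10,11,12,13,14)])
  have "ip g0 e1 = (LINT y:Ioi a b|lborel. g0 y * e1 y * w y * p y)"
    unfolding ip_def sli_real by (simp add: mult_ac)
  then have "ip g0 e1 \<noteq> 0" using assms(16) by simp
  from main[OF assms(15) this] show ?thesis .
qed

end
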